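(* Let $\mathbb{F}\in\{\mathbb{R},\mathbb{C},\mathbb{H}\}$, $G=\mathrm{SL}(3,\mathbb{F})$, and let $\mathcal{P}_\sigma$ be the set of minimal $\sigma$-parabolic subgroups of $G$ (minimal parabolic $P$ with $\sigma(P)$ opposite to $P$). The action of $H$ on $\mathcal{P}_\sigma$ by conjugation has exactly three orbits, and these are the $H$-conjugacy classes of $P_1$, $P_2$ and $P_3$.
   Context: $\theta(g)=(g^{-1})^\dagger$, $J=\mathrm{diag}(1,-1,-1)$, $\sigma(g)=J\theta(g)J$, $H$ the identity component of $G^\sigma$. $\mathfrak{a}$ = real traceless diagonal matrices, $e_i(\mathrm{diag}(x_1,x_2,x_3))=x_i$. $\Sigma_1=\{e_1-e_2,e_1-e_3,e_2-e_3\}$, $\Sigma_2=\{e_2-e_1,e_1-e_3,e_2-e_3\}$, $\Sigma_3=\{e_2-e_1,e_3-e_1,e_2-e_3\}$, and $P_i$ is the minimal parabolic subgroup whose Lie algebra contains $\mathfrak{a}$ and whose set of $\mathfrak{a}$-roots is $\Sigma_i$. *)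

theory Defs
  imports "HOL-Analysis.Analysis"
begin

datatype quat = Quat (qRe: real) (qI: real) (qJ: real) (qK: real)

instantiation quat :: ring_1
begin
definition "0 = Quat 0 0 0 0"
definition "1 = Quat 1 0 0 0"
definition "x + y = Quat (qRe x + qRe y) (qI x + qI y) (qJ x + qJ y) (qK x + qK y)"
definition "- x = Quat (- qRe x) (- qI x) (- qJ x) (- qK x)"
definition "x - y = Quat (qRe x - qRe y) (qI x - qI y) (qJ x - qJ y) (qK x - qK y)"
definition "x * y = Quat
   (qRe x * qRe y - qI x * qI y - qJ x * qJ y - qK x * qK y)
   (qRe x * qI y + qI x * qRe y + qJ x * qK y - qK x * qJ y)
   (qRe x * qJ y - qI x * qK y + qJ x * qRe y + qK x * qI y)
   (qRe x * qK y + qI x * qJ y - qJ x * qI y + qK x * qRe y)"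
instance
  by standard (auto simp: zero_quat_def one_quat_def plus_quat_def uminus_quat_def
      minus_quat_def times_quat_def algebra_simps intro: quat.expand)
end

definition quat_coords :: "quat \<Rightarrow> real \<times> real \<times> real \<times> real" where
  "quat_coords q = (qRe q, qI q, qJ q, qK q)"

instantiation quat :: topological_space
begin
definition open_quat_def: "open (U :: quat set) \<longleftrightarrow> (\<exists>V. open V \<and> U = quat_coords -` V)"
instance
proof
  show "open (UNIV :: quat set)" unfolding open_quat_def by (rule exI[of _ UNIV]) auto
next
  fix S T :: "quat set" assume "open S" "open T"
  then obtain V W where "open V" "S = quat_coords -` V" "open W" "T = quat_coords -` W"
    unfolding open_quat_def by blast
  then show "open (S \<inter> T)" unfolding open_quat_def
    by (intro exI[of _ "V \<inter> W"]) auto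
next
  fix K :: "quat set set" assume "\<forall>S\<in>K. open S"
  then have "\<forall>S\<in>K. \<exists>V. open V \<and> S = quat_coords -` V" unfolding open_quat_def by blast
  then obtain f where f: "\<forall>S\<in>K. open (f S) \<and> S = quat_coords -` f S" by metis
  then show "open (\<Union> K)" unfolding open_quat_def
    by (intro exI[of _ "\<Union>(f ` K)"]) auto
qed
end

definition quat_cnj :: "quat \<Rightarrow> quat" where
  "quat_cnj q = Quat (qRe q) (- qI q) (- qJ q) (- qK q)"

text \<open>Standard complex 2x2 representation of a quaternion q = z + w j (z = a + b i, w = c + d i):
  q \<mapsto> [[z, w], [-cnj w, cnj z]].  It is an injective ring homomorphism.\<close>

definition quat_cplx :: "quat \<Rightarrow> complex ^ 2 ^ 2" where
  "quat_cplx q = (let z = Complex (qRe q) (qI q); w = Complex (qJ q) (qK q) in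
     (\<chi> a b. if a = 1 then (if b = 1 then z else w) else (if b = 1 then - cnj w else cnj z)))"

definition qmat_cplx :: "quat ^ 3 ^ 3 \<Rightarrow> complex ^ (3 \<times> 2) ^ (3 \<times> 2)" where
  "qmat_cplx g = (\<chi> p q. quat_cplx (g $ fst p $ fst q) $ snd p $ snd q)"

definition SL3_real :: "(real ^ 3 ^ 3) set" where
  "SL3_real = {g. det g = 1}"

definition SL3_complex :: "(complex ^ 3 ^ 3) set" where
  "SL3_complex = {g. det g = 1}"

text \<open>SL(3,H) = GL(3,H) \<inter> SL(6,C) (reduced norm one).\<close>
definition SL3_quat :: "(quat ^ 3 ^ 3) set" where
  "SL3_quat = {g. det (qmat_cplx g) = 1}"

text \<open>Matrix indices are 1, 2, 3 (elements of the numeral type 3).\<close>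

definition minv :: "'a::ring_1 ^ 3 ^ 3 \<Rightarrow> 'a ^ 3 ^ 3" where
  "minv A = matrix_inv A"

definition ctrans :: "('a \<Rightarrow> 'a) \<Rightarrow> 'a ^ 3 ^ 3 \<Rightarrow> 'a ^ 3 ^ 3" where
  "ctrans cj A = (\<chi> i j. cj (A $ j $ i))"

definition Jmat :: "'a::ring_1 ^ 3 ^ 3" where
  "Jmat = (\<chi> i j. if i = j then (if i = 1 then 1 else - 1) else 0)"

definition theta :: "('a::ring_1 \<Rightarrow> 'a) \<Rightarrow> 'a ^ 3 ^ 3 \<Rightarrow> 'a ^ 3 ^ 3" where
  "theta cj g = ctrans cj (minv g)"

definition sigma :: "('a::ring_1 \<Rightarrow> 'a) \<Rightarrow> 'a ^ 3 ^ 3 \<Rightarrow> 'a ^ 3 ^ 3" where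
  "sigma cj g = Jmat ** theta cj g ** Jmat"

definition Hgrp :: "('a::{ring_1,topological_space} \<Rightarrow> 'a) \<Rightarrow> ('a ^ 3 ^ 3) set \<Rightarrow> ('a ^ 3 ^ 3) set" where
  "Hgrp cj G = connected_component_set {g \<in> G. sigma cj g = g} (mat 1)"

definition conjgrp :: "'a::ring_1 ^ 3 ^ 3 \<Rightarrow> ('a ^ 3 ^ 3) set \<Rightarrow> ('a ^ 3 ^ 3) set" where
  "conjgrp g P = (\<lambda>p. g ** p ** minv g) ` P"

text \<open>The minimal parabolic subgroups P_1, P_2, P_3 containing A (= exp of the real traceless
  diagonal matrices) with a-roots Sigma_1, Sigma_2, Sigma_3; the root space of e_i - e_j is
  spanned by the elementary matrices E_ij, so P_k consists of the elements of G vanishing at the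
  entries (i,j) with e_i - e_j not in Sigma_k \<union> {0}.\<close>

definition P1 :: "('a::ring_1 ^ 3 ^ 3) set \<Rightarrow> ('a ^ 3 ^ 3) set" where
  "P1 G = {g \<in> G. g $ 2 $ 1 = 0 \<and> g $ 3 $ 1 = 0 \<and> g $ 3 $ 2 = 0}"

definition P2 :: "('a::ring_1 ^ 3 ^ 3) set \<Rightarrow> ('a ^ 3 ^ 3) set" where
  "P2 G = {g \<in> G. g $ 1 $ 2 = 0 \<and> g $ 3 $ 1 = 0 \<and> g $ 3 $ 2 = 0}"

definition P3 :: "('a::ring_1 ^ 3 ^ 3) set \<Rightarrow> ('a ^ 3 ^ 3) set" where
  "P3 G = {g \<in> G. g $ 1 $ 2 = 0 \<and> g $ 1 $ 3 = 0 \<and> g $ 3 $ 2 = 0}"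

definition P1opp :: "('a::ring_1 ^ 3 ^ 3) set \<Rightarrow> ('a ^ 3 ^ 3) set" where
  "P1opp G = {g \<in> G. g $ 1 $ 2 = 0 \<and> g $ 1 $ 3 = 0 \<and> g $ 2 $ 3 = 0}"

definition minparabolics :: "('a::ring_1 ^ 3 ^ 3) set \<Rightarrow> ('a ^ 3 ^ 3) set set" where
  "minparabolics G = {conjgrp g (P1 G) | g. g \<in> G}"

text \<open>Two minimal parabolic subgroups are opposite iff they are simultaneously G-conjugate to
  the standard opposite pair (P_1, P_1^-), i.e. their intersection is a common Levi factor.\<close>
definition opposite :: "('a::ring_1 ^ 3 ^ 3) set \<Rightarrow> ('a ^ 3 ^ 3) set \<Rightarrow> ('a ^ 3 ^ 3) set \<Rightarrow> bool" where
  "opposite G P Q \<longleftrightarrow> (\<exists>g\<in>G. P = conjgrp g (P1 G) \<and> Q = conjgrp g (P1opp G))"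

definition sigma_parabolics :: "('a::ring_1 \<Rightarrow> 'a) \<Rightarrow> ('a ^ 3 ^ 3) set \<Rightarrow> ('a ^ 3 ^ 3) set set" where
  "sigma_parabolics cj G = {P \<in> minparabolics G. opposite G P (sigma cj ` P)}"

definition Horbit :: "('a::{ring_1,topological_space} \<Rightarrow> 'a) \<Rightarrow> ('a ^ 3 ^ 3) set \<Rightarrow> ('a ^ 3 ^ 3) set \<Rightarrow> ('a ^ 3 ^ 3) set set" where
  "Horbit cj G P = {conjgrp h P | h. h \<in> Hgrp cj G}"

definition three_orbits :: "('a::{ring_1,topological_space} \<Rightarrow> 'a) \<Rightarrow> ('a ^ 3 ^ 3) set \<Rightarrow> bool" where
  "three_orbits cj G \<longleftrightarrow>
     P1 G \<in> sigma_parabolics cj G \<and> P2 G \<in> sigma_parabolics cj G \<and> P3 G \<in> sigma_parabolics cj G \<and>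
     Horbit cj G ` sigma_parabolics cj G = {Horbit cj G (P1 G), Horbit cj G (P2 G), Horbit cj G (P3 G)} \<and>
     card {Horbit cj G (P1 G), Horbit cj G (P2 G), Horbit cj G (P3 G)} = 3"

end

theory Submission
  imports Defs
begin

definition elem :: "3 \<Rightarrow> 3 \<Rightarrow> 'a::ring_1 \<Rightarrow> 'a^3^3" where
  "elem i j q = (\<chi> a b. if a = b then 1 else if a = i \<and> b = j then q else 0)"

definition dg :: "'a::ring_1 \<Rightarrow> 'a \<Rightarrow> 'a \<Rightarrow> 'a^3^3" where
  "dg x y z = (\<chi> a b. if a = b then (if a = 1 then x else if a = 2 then y else z) else 0)"

definition M3 :: "'a::ring_1 \<Rightarrow> 'a \<Rightarrow> 'a \<Rightarrow> 'a \<Rightarrow> 'a \<Rightarrow> 'a \<Rightarrow> 'a \<Rightarrow> 'a \<Rightarrow> 'a \<Rightarrow> 'a^3^3" where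
  "M3 a b c d e f g h i = (\<chi> r s. if r = 1 then (if s = 1 then a else if s = 2 then b else c)
     else if r = 2 then (if s = 1 then d else if s = 2 then e else f)
     else (if s = 1 then g else if s = 2 then h else i))"

definition inv3 :: "'a::ring_1^3^3 \<Rightarrow> 'a^3^3 \<Rightarrow> bool" where
  "inv3 a b \<longleftrightarrow> a ** b = mat 1 \<and> b ** a = mat 1"

lemma M3_nth[simp]:
  "M3 a b c d e f g h i $ 1 $ 1 = a" "M3 a b c d e f g h i $ 1 $ 2 = b" "M3 a b c d e f g h i $ 1 $ 3 = c"
  "M3 a b c d e f g h i $ 2 $ 1 = d" "M3 a b c d e f g h i $ 2 $ 2 = e" "M3 a b c d e f g h i $ 2 $ 3 = f"
  "M3 a b c d e f g h i $ 3 $ 1 = g" "M3 a b c d e f g h i $ 3 $ 2 = h" "M3 a b c d e f g h i $ 3 $ 3 = i"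
  by (simp_all add: M3_def)

lemma mat_eq3: "(A::'a^3^3) = B \<longleftrightarrow> A$1$1 = B$1$1 \<and> A$1$2 = B$1$2 \<and> A$1$3 = B$1$3 \<and>
   A$2$1 = B$2$1 \<and> A$2$2 = B$2$2 \<and> A$2$3 = B$2$3 \<and> A$3$1 = B$3$1 \<and> A$3$2 = B$3$2 \<and> A$3$3 = B$3$3"
  by (auto simp: vec_eq_iff forall_3)

lemma M3_eta: "(A::'a::ring_1^3^3) = M3 (A$1$1) (A$1$2) (A$1$3) (A$2$1) (A$2$2) (A$2$3) (A$3$1) (A$3$2) (A$3$3)"
  by (simp add: mat_eq3)

lemma mult_nth: "((A::'a::ring_1^3^3) ** B) $ i $ j = A$i$1 * B$1$j + A$i$2 * B$2$j + A$i$3 * B$3$j"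
  by (simp add: matrix_matrix_mult_def sum_3)

lemma M3_mult: "M3 a b c d e f g h i ** M3 a' b' c' d' e' f' g' h' i' =
  M3 (a*a' + b*d' + c*g') (a*b' + b*e' + c*h') (a*c' + b*f' + c*i')
     (d*a' + e*d' + f*g') (d*b' + e*e' + f*h') (d*c' + e*f' + f*i')
     (g*a' + h*d' + i*g') (g*b' + h*e' + i*h') (g*c' + h*f' + i*i')"
  by (simp add: mat_eq3 mult_nth)

lemma mat1_M3: "(mat 1 :: 'a::ring_1^3^3) = M3 1 0 0 0 1 0 0 0 1"
  by (simp add: mat_eq3 mat_def)

lemma elem_M3:
  "elem 1 2 q = M3 1 q 0 0 1 0 0 0 1" "elem 1 3 q = M3 1 0 q 0 1 0 0 0 1"
  "elem 2 1 q = M3 1 0 0 q 1 0 0 0 1" "elem 2 3 q = M3 1 0 0 0 1 q 0 0 1"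
  "elem 3 1 q = M3 1 0 0 0 1 0 q 0 1" "elem 3 2 q = M3 1 0 0 0 1 0 0 q 1"
  by (simp_all add: mat_eq3 elem_def)

lemma dg_M3: "dg x y z = M3 x 0 0 0 y 0 0 0 z"
  by (simp add: mat_eq3 dg_def)

lemma Jmat_M3: "(Jmat :: 'a::ring_1^3^3) = M3 1 0 0 0 (-1) 0 0 0 (-1)"
  by (simp add: mat_eq3 Jmat_def)

lemma ctrans_M3: "ctrans cj (M3 a b c d e f g h i) = M3 (cj a) (cj d) (cj g) (cj b) (cj e) (cj h) (cj c) (cj f) (cj i)"
  by (simp add: mat_eq3 ctrans_def)

lemma inv3_unique: "inv3 a b \<Longrightarrow> inv3 a c \<Longrightarrow> b = c"
  unfolding inv3_def by (metis matrix_mul_assoc matrix_mul_lid matrix_mul_rid)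

lemma minv_eq: "inv3 a b \<Longrightarrow> minv a = b"
  unfolding minv_def matrix_inv_def
  by (rule some_equality) (auto simp: inv3_def intro: inv3_unique[unfolded inv3_def])

lemma inv3_minv: "inv3 a b \<Longrightarrow> inv3 a (minv a)"
  using minv_eq by metis

lemma inv3_cancel: "inv3 a b \<Longrightarrow> A ** a ** b = A" "inv3 a b \<Longrightarrow> A ** b ** a = A"
  unfolding inv3_def by (metis matrix_mul_assoc matrix_mul_rid)+

lemma inv3_sym: "inv3 a b \<Longrightarrow> inv3 b a" by (auto simp: inv3_def)

lemma inv3_mult: "inv3 a a' \<Longrightarrow> inv3 b b' \<Longrightarrow> inv3 (a ** b) (b' ** a')"
  unfolding inv3_def
  by (metis matrix_mul_assoc matrix_mul_lid)

lemma inv3_one: "inv3 (mat 1) (mat 1)" by (simp add: inv3_def)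

lemma minv_one: "minv (mat 1 :: 'a::ring_1^3^3) = mat 1" by (rule minv_eq[OF inv3_one])

lemma conjgrp_conjgrp: "inv3 a a' \<Longrightarrow> inv3 b b' \<Longrightarrow>
   conjgrp a (conjgrp b X) = conjgrp (a ** b) X"
  unfolding conjgrp_def
  using minv_eq[of a a'] minv_eq[of b b'] minv_eq[OF inv3_mult, of a a' b b']
  by (auto simp: image_image matrix_mul_assoc)

lemma conjgrp_one: "conjgrp (mat 1) X = X"
  by (simp add: conjgrp_def minv_one)

locale sfld =
  fixes cj :: "'a::{ring_1,topological_space} \<Rightarrow> 'a"
    and rl :: "real \<Rightarrow> 'a"
    and nrm :: "'a \<Rightarrow> real"
    and G :: "('a^3^3) set"
  assumes cj_add: "cj (x + y) = cj x + cj y"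
    and cj_mult: "cj (x * y) = cj y * cj x"
    and cj_cj[simp]: "cj (cj x) = x"
    and cj_rl[simp]: "cj (rl r) = rl r"
    and rl_add: "rl (r + s) = rl r + rl s"
    and rl_mult: "rl (r * s) = rl r * rl s"
    and rl_one[simp]: "rl 1 = 1"
    and rl_inj: "rl r = rl s \<Longrightarrow> r = s"
    and rl_comm: "rl r * x = x * rl r"
    and nrm_l: "cj x * x = rl (nrm x)"
    and nrm_r: "x * cj x = rl (nrm x)"
    and nrm_nonneg[simp]: "0 \<le> nrm x"
    and nrm_eq0: "nrm x = 0 \<Longrightarrow> x = 0"
    and selfadj: "cj x = x \<Longrightarrow> \<exists>r. x = rl r"
    and cont_mult: "continuous_on UNIV (\<lambda>p::'a\<times>'a. fst p * snd p)"
    and cont_add: "continuous_on UNIV (\<lambda>p::'a\<times>'a. fst p + snd p)"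
    and cont_cj: "continuous_on UNIV cj"
    and cont_rl: "continuous_on UNIV rl"
    and G_inv: "g \<in> G \<Longrightarrow> inv3 g (minv g)"
    and G_mult: "g \<in> G \<Longrightarrow> h \<in> G \<Longrightarrow> g ** h \<in> G"
    and G_minv: "g \<in> G \<Longrightarrow> minv g \<in> G"
    and G_conj: "g \<in> G \<Longrightarrow> inv3 a b \<Longrightarrow> a ** g ** b \<in> G"
    and G_ctrans: "g \<in> G \<Longrightarrow> ctrans cj g \<in> G"
    and G_elem: "i \<noteq> j \<Longrightarrow> elem i j q \<in> G"
begin

lemma rl_zero[simp]: "rl 0 = 0"
  using rl_add[of 0 0] by simp

lemma rl_minus: "rl (- r) = - rl r"
  by (metis minus_unique rl_add add.right_inverse rl_zero)

lemma rl_m1[simp]: "rl (-1) = -1" by (simp add: rl_minus)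

lemma rl_diff: "rl (r - s) = rl r - rl s"
  using rl_add[of r "-s"] rl_minus by simp

lemma rl_eq0: "rl r = 0 \<longleftrightarrow> r = 0"
  using rl_inj[of r 0] by auto

lemma cj_zero[simp]: "cj 0 = 0"
  using cj_add[of 0 0] by simp

lemma cj_one[simp]: "cj 1 = 1"
  using cj_rl[of 1] by simp

lemma cj_minus: "cj (- x) = - cj x"
  by (metis minus_unique cj_add add.right_inverse cj_zero)

lemma cj_diff: "cj (x - y) = cj x - cj y"
  using cj_add[of x "-y"] cj_minus by simp

lemma cj_eq0[simp]: "cj x = 0 \<longleftrightarrow> x = 0"
  by (metis cj_cj cj_zero)

lemma cj_sum: "cj (sum f A) = sum (\<lambda>x. cj (f x)) A"
  by (induct A rule: infinite_finite_induct) (auto simp: cj_add)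

lemma nrm_zero[simp]: "nrm 0 = 0"
  using nrm_l[of 0] rl_eq0 by simp

lemma nrm_eq0_iff[simp]: "nrm x = 0 \<longleftrightarrow> x = 0"
  using nrm_eq0 by auto

lemma nrm_rl: "nrm (rl r) = r * r"
  using nrm_l[of "rl r"] rl_mult[of r r] by (auto dest: rl_inj)

lemma nrm_one[simp]: "nrm 1 = 1"
  using nrm_rl[of 1] by simp

lemma nrm_mult: "nrm (x * y) = nrm x * nrm y"
proof -
  have "rl (nrm (x*y)) = cj y * (cj x * x) * y" by (simp add: nrm_l[symmetric] cj_mult mult.assoc)
  also have "\<dots> = cj y * rl (nrm x) * y" by (simp add: nrm_l mult.assoc)
  also have "\<dots> = rl (nrm x) * (cj y * y)" by (metis rl_comm mult.assoc)
  also have "\<dots> = rl (nrm x * nrm y)" by (simp add: nrm_l rl_mult)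
  finally show ?thesis by (rule rl_inj)
qed

lemma nrm_cj: "nrm (cj x) = nrm x"
  using nrm_l[of "cj x"] nrm_r[of x] by (auto dest: rl_inj)

definition dinv :: "'a \<Rightarrow> 'a" where "dinv x = cj x * rl (1 / nrm x)"

lemma dinv_r: "x \<noteq> 0 \<Longrightarrow> x * dinv x = 1"
  unfolding dinv_def by (simp add: mult.assoc[symmetric] nrm_r rl_mult[symmetric])

lemma dinv_l: "x \<noteq> 0 \<Longrightarrow> dinv x * x = 1"
  unfolding dinv_def proof -
  assume "x \<noteq> 0"
  have "cj x * rl (1 / nrm x) * x = rl (1 / nrm x) * (cj x * x)" by (metis rl_comm mult.assoc)
  also have "\<dots> = 1" using \<open>x \<noteq> 0\<close> by (simp add: nrm_l rl_mult[symmetric])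
  finally show "cj x * rl (1 / nrm x) * x = 1" .
qed

lemma no_zd: "(x::'a) * y = 0 \<Longrightarrow> x = 0 \<or> y = 0"
proof (cases "x = 0")
  case False
  assume e: "x * y = 0"
  have "y = (dinv x * x) * y" using dinv_l[OF False] by simp
  also have "\<dots> = 0" by (simp only: mult.assoc e mult_zero_right)
  finally show ?thesis by simp
qed simp

lemma mult_eq0_iff[simp]: "(x::'a) * y = 0 \<longleftrightarrow> x = 0 \<or> y = 0"
  using no_zd by (metis mult_zero_left mult_zero_right)

lemma one_neq_zero': "(1::'a) \<noteq> 0"
  using rl_eq0[of 1] by simp


lemma M3_eq: "M3 a b c d e f g h i = M3 a' b' c' d' e' f' g' h' i' \<longleftrightarrow>
  a = a' \<and> b = b' \<and> c = c' \<and> d = d' \<and> e = e' \<and> f = f' \<and> g = g' \<and> h = h' \<and> i = i'"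
  by (simp add: mat_eq3)

lemma ctrans_mult: "ctrans cj (A ** B) = ctrans cj B ** ctrans cj A"
  by (simp add: mat_eq3 ctrans_def mult_nth cj_add cj_mult)

lemma ctrans_ctrans[simp]: "ctrans cj (ctrans cj A) = A"
  by (simp add: vec_eq_iff ctrans_def)

lemma ctrans_one[simp]: "ctrans cj (mat 1) = mat 1"
  by (simp add: vec_eq_iff ctrans_def mat_def)

lemma ctrans_J[simp]: "ctrans cj Jmat = Jmat"
  by (simp add: mat_eq3 ctrans_def Jmat_def cj_minus)

lemma JJ[simp]: "Jmat ** Jmat = (mat 1 :: 'a^3^3)"
  by (simp add: Jmat_M3 mat1_M3 M3_mult)

lemma JJ'[simp]: "Jmat ** (Jmat ** A) = (A :: 'a^3^3)"
  by (simp add: matrix_mul_assoc)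

lemma JJ''[simp]: "A ** Jmat ** Jmat = (A :: 'a^3^3)"
  by (metis JJ matrix_mul_assoc matrix_mul_rid)

lemma inv3_J: "inv3 Jmat (Jmat :: 'a^3^3)"
  by (simp add: inv3_def)

lemma inv3_ctrans: "inv3 a b \<Longrightarrow> inv3 (ctrans cj a) (ctrans cj b)"
  unfolding inv3_def by (metis ctrans_mult ctrans_one)

lemma ctrans_inj: "ctrans cj a = ctrans cj b \<Longrightarrow> a = b"
  by (metis ctrans_ctrans)

lemma sigma_def': "sigma cj g = Jmat ** ctrans cj (minv g) ** Jmat"
  by (simp add: sigma_def theta_def)

lemma sigma_G: "g \<in> G \<Longrightarrow> sigma cj g \<in> G"
  unfolding sigma_def' by (intro G_conj G_ctrans G_minv inv3_J)

lemma minv_mult: "inv3 a a' \<Longrightarrow> inv3 b b' \<Longrightarrow> minv (a ** b) = minv b ** minv a"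
  using minv_eq inv3_mult by metis

lemma minv_G_mult: "a \<in> G \<Longrightarrow> b \<in> G \<Longrightarrow> minv (a ** b) = minv b ** minv a"
  using minv_mult G_inv by metis

lemma minv_minv: "inv3 a b \<Longrightarrow> minv (minv a) = a"
  by (metis inv3_sym minv_eq)

lemma minv_ctrans: "inv3 a b \<Longrightarrow> minv (ctrans cj a) = ctrans cj (minv a)"
  by (metis inv3_ctrans minv_eq)

lemma sigma_mult: "g \<in> G \<Longrightarrow> h \<in> G \<Longrightarrow> sigma cj (g ** h) = sigma cj g ** sigma cj h"
  unfolding sigma_def' by (simp add: minv_G_mult ctrans_mult matrix_mul_assoc)

lemma sigma_sigma: "g \<in> G \<Longrightarrow> sigma cj (sigma cj g) = g"
proof -
  assume g: "g \<in> G"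
  have i: "inv3 g (minv g)" using G_inv g by blast
  have "minv (Jmat ** ctrans cj (minv g) ** Jmat) = Jmat ** ctrans cj g ** Jmat"
    apply (rule minv_eq)
    using inv3_mult[OF inv3_mult[OF inv3_J inv3_ctrans[OF inv3_sym[OF i]]] inv3_J]
    by (simp add: matrix_mul_assoc)
  then show ?thesis unfolding sigma_def' by (simp add: ctrans_mult matrix_mul_assoc)
qed

lemma sigma_one: "sigma cj (mat 1) = mat 1"
  by (simp add: sigma_def' minv_one)

lemma sigma_minv: "g \<in> G \<Longrightarrow> sigma cj (minv g) = minv (sigma cj g)"
proof -
  assume g: "g \<in> G"
  have i: "inv3 g (minv g)" using G_inv g by blast
  have "sigma cj g ** sigma cj (minv g) = mat 1"
    using sigma_mult[OF g G_minv[OF g]] i by (simp add: inv3_def sigma_one)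
  moreover have "sigma cj (minv g) ** sigma cj g = mat 1"
    using sigma_mult[OF G_minv[OF g] g] i by (simp add: inv3_def sigma_one)
  ultimately have "inv3 (sigma cj g) (sigma cj (minv g))" by (simp add: inv3_def)
  then show ?thesis by (metis minv_eq)
qed

definition UJ :: "'a^3^3 \<Rightarrow> bool" where "UJ g \<longleftrightarrow> ctrans cj g ** Jmat ** g = Jmat"

lemma UJ_inv: "inv3 g g' \<Longrightarrow> UJ g \<Longrightarrow> g' = Jmat ** ctrans cj g ** Jmat"
proof -
  assume i: "inv3 g g'" and u: "UJ g"
  have "Jmat ** ctrans cj g ** Jmat ** g = mat 1" using u unfolding UJ_def
    by (metis JJ matrix_mul_assoc)
  then have "Jmat ** ctrans cj g ** Jmat ** g ** g' = g'" by simp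
  then show ?thesis using i unfolding inv3_def by (metis matrix_mul_assoc matrix_mul_rid)
qed

lemma UJ_right: "inv3 g g' \<Longrightarrow> UJ g \<Longrightarrow> g ** Jmat ** ctrans cj g = Jmat"
proof -
  assume i: "inv3 g g'" and u: "UJ g"
  have "g ** (Jmat ** ctrans cj g ** Jmat) = mat 1" using UJ_inv[OF i u] i by (simp add: inv3_def)
  then have "g ** Jmat ** ctrans cj g ** Jmat ** Jmat = Jmat" by (simp add: matrix_mul_assoc)
  then show ?thesis by (simp add: matrix_mul_assoc)
qed

lemma UJ_mult: "UJ a \<Longrightarrow> UJ b \<Longrightarrow> UJ (a ** b)"
  unfolding UJ_def by (simp add: ctrans_mult matrix_mul_assoc)
    (metis matrix_mul_assoc)

lemma UJ_inv': assumes i: "inv3 g g'" and u: "UJ g" shows "UJ g'"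
proof -
  have g': "g' = Jmat ** ctrans cj g ** Jmat" using UJ_inv[OF i u] .
  have r: "g ** Jmat ** ctrans cj g = Jmat" using UJ_right[OF i u] .
  have "ctrans cj g' ** Jmat ** g' = Jmat ** (g ** Jmat ** ctrans cj g) ** Jmat"
    unfolding g' by (simp add: ctrans_mult matrix_mul_assoc)
  then show ?thesis unfolding UJ_def r by simp
qed

lemma UJ_ctrans: "inv3 g g' \<Longrightarrow> UJ g \<Longrightarrow> UJ (ctrans cj g)"
  using UJ_right unfolding UJ_def by (simp add: matrix_mul_assoc)

lemma sigma_fix_iff: "g \<in> G \<Longrightarrow> sigma cj g = g \<longleftrightarrow> UJ g"
proof
  assume g: "g \<in> G" and s: "sigma cj g = g"
  have i: "inv3 g (minv g)" using G_inv g by blast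
  have "ctrans cj (minv g) = Jmat ** g ** Jmat" using s unfolding sigma_def'
    by (metis JJ matrix_mul_assoc matrix_mul_lid matrix_mul_rid)
  then have "minv g = ctrans cj (Jmat ** g ** Jmat)" by (metis ctrans_ctrans)
  then have "minv g = Jmat ** ctrans cj g ** Jmat" by (simp add: ctrans_mult matrix_mul_assoc)
  then have "Jmat ** ctrans cj g ** Jmat ** g = mat 1" using i by (simp add: inv3_def)
  then have "Jmat ** (Jmat ** ctrans cj g ** Jmat ** g) = Jmat" by simp
  then show "UJ g" unfolding UJ_def by (simp add: matrix_mul_assoc)
next
  assume g: "g \<in> G" and u: "UJ g"
  have i: "inv3 g (minv g)" using G_inv g by blast
  have "minv g = Jmat ** ctrans cj g ** Jmat" using UJ_inv[OF i u] .
  then show "sigma cj g = g" unfolding sigma_def' by (simp add: ctrans_mult matrix_mul_assoc)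
qed

definition upper :: "'a^3^3 \<Rightarrow> bool" where
  "upper g \<longleftrightarrow> g$2$1 = 0 \<and> g$3$1 = 0 \<and> g$3$2 = 0"
definition lower :: "'a^3^3 \<Rightarrow> bool" where
  "lower g \<longleftrightarrow> g$1$2 = 0 \<and> g$1$3 = 0 \<and> g$2$3 = 0"

lemma P1_eq: "P1 G = {g \<in> G. upper g}" by (simp add: P1_def upper_def)
lemma P1opp_eq: "P1opp G = {g \<in> G. lower g}" by (simp add: P1opp_def lower_def)

lemma upper_mult: "upper a \<Longrightarrow> upper b \<Longrightarrow> upper (a ** b)"
  by (simp add: upper_def mult_nth)
lemma lower_mult: "lower a \<Longrightarrow> lower b \<Longrightarrow> lower (a ** b)"
  by (simp add: lower_def mult_nth)
lemma upper_ctrans: "upper (ctrans cj a) \<longleftrightarrow> lower a"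
  by (auto simp: upper_def lower_def ctrans_def)
lemma lower_ctrans: "lower (ctrans cj a) \<longleftrightarrow> upper a"
  by (auto simp: upper_def lower_def ctrans_def)
lemma lower_J: "lower Jmat" by (simp add: lower_def Jmat_def)
lemma upper_J: "upper Jmat" by (simp add: upper_def Jmat_def)

lemma upper_minv: assumes i: "inv3 g g'" and u: "upper g" shows "upper g'"
proof -
  have e: "g' ** g = mat 1" using i by (simp add: inv3_def)
  have e11: "g'$1$1 * g$1$1 = 1" and e21: "g'$2$1 * g$1$1 = 0" and e31: "g'$3$1 * g$1$1 = 0"
    and e22: "g'$2$1 * g$1$2 + g'$2$2 * g$2$2 = 1" and e32: "g'$3$1 * g$1$2 + g'$3$2 * g$2$2 = 0"
    using arg_cong[OF e, of "\<lambda>m. m$1$1"] arg_cong[OF e, of "\<lambda>m. m$2$1"] arg_cong[OF e, of "\<lambda>m. m$3$1"]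
      arg_cong[OF e, of "\<lambda>m. m$2$2"] arg_cong[OF e, of "\<lambda>m. m$3$2"] u
    by (simp_all add: mult_nth mat_def upper_def)
  have "g$1$1 \<noteq> 0" using e11 one_neq_zero' by auto
  then have "g'$2$1 = 0" "g'$3$1 = 0" using e21 e31 by auto
  moreover then have "g$2$2 \<noteq> 0" using e22 one_neq_zero' by auto
  ultimately show ?thesis using e32 by (simp add: upper_def)
qed

lemma lower_minv: assumes i: "inv3 g g'" and u: "lower g" shows "lower g'"
  using upper_minv[OF inv3_ctrans[OF i]] u by (simp add: upper_ctrans)

lemma sigma_upper: "g \<in> G \<Longrightarrow> upper g \<Longrightarrow> lower (sigma cj g)"
  unfolding sigma_def'
  by (intro lower_mult lower_J) (simp add: lower_ctrans upper_minv[OF G_inv])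

lemma sigma_lower: "g \<in> G \<Longrightarrow> lower g \<Longrightarrow> upper (sigma cj g)"
  unfolding sigma_def'
  by (intro upper_mult upper_J) (simp add: upper_ctrans lower_minv[OF G_inv])

lemma sigma_P1: "sigma cj ` P1 G = P1opp G"
proof
  show "sigma cj ` P1 G \<subseteq> P1opp G"
    by (auto simp: P1_eq P1opp_eq sigma_G sigma_upper)
  show "P1opp G \<subseteq> sigma cj ` P1 G"
  proof
    fix q assume q: "q \<in> P1opp G"
    then have "q = sigma cj (sigma cj q)" by (simp add: P1opp_eq sigma_sigma)
    moreover have "sigma cj q \<in> P1 G" using q by (simp add: P1opp_eq P1_eq sigma_G sigma_lower)
    ultimately show "q \<in> sigma cj ` P1 G" by blast
  qed
qed

lemma sigma_P1opp: "sigma cj ` P1opp G = P1 G"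
proof -
  have "sigma cj ` P1opp G = sigma cj ` sigma cj ` P1 G" by (simp add: sigma_P1)
  also have "\<dots> = P1 G" by (auto simp: image_image P1_eq sigma_sigma)
  finally show ?thesis .
qed

lemma sigma_conjgrp: assumes a: "a \<in> G" and X: "X \<subseteq> G"
  shows "sigma cj ` conjgrp a X = conjgrp (sigma cj a) (sigma cj ` X)"
proof -
  have "sigma cj (a ** p ** minv a) = sigma cj a ** sigma cj p ** minv (sigma cj a)" if "p \<in> X" for p
    using that X a by (simp add: sigma_mult G_mult G_minv sigma_minv subset_iff)
  then show ?thesis unfolding conjgrp_def by (auto simp: image_image)
qed

lemma aux_col: "(b::'a) = b * l \<Longrightarrow> a + b = a * l \<Longrightarrow> b = 0"
proof -
  assume 1: "b = b * l" and 2: "a + b = a * l"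
  have "b * (l - 1) = 0" using 1 by (simp add: algebra_simps)
  then have "b = 0 \<or> l = 1" by auto
  then show "b = 0" using 2 by auto
qed

lemma aux_row: "(b::'a) = m * b \<Longrightarrow> c + b = m * c \<Longrightarrow> b = 0"
proof -
  assume 1: "b = m * b" and 2: "c + b = m * c"
  have "(m - 1) * b = 0" using 1 by (simp add: algebra_simps)
  then have "b = 0 \<or> m = 1" by auto
  then show "b = 0" using 2 by auto
qed

lemma elem_P1: "elem 1 2 q \<in> P1 G" "elem 1 3 q \<in> P1 G" "elem 2 3 q \<in> P1 G"
  using G_elem[of 1 2 q] G_elem[of 1 3 q] G_elem[of 2 3 q]
  by (auto simp: P1_eq upper_def elem_def)

lemma normP1: assumes x: "x \<in> G" and c: "conjgrp x (P1 G) = P1 G" shows "x \<in> P1 G"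
proof -
  have i: "inv3 x (minv x)" using G_inv x by blast
  have bk: "\<exists>p'. p' \<in> P1 G \<and> p ** x = x ** p'" if p: "p \<in> P1 G" for p
  proof -
    from p c obtain p' where p': "p' \<in> P1 G" "p = x ** p' ** minv x" unfolding conjgrp_def by auto
    then have "p ** x = x ** p'" using i by (simp add: inv3_def matrix_mul_assoc[symmetric])
    then show ?thesis using p' by blast
  qed
  have fw: "\<exists>p'. p' \<in> P1 G \<and> x ** p = p' ** x" if p: "p \<in> P1 G" for p
  proof -
    have "x ** p ** minv x \<in> P1 G" using p c unfolding conjgrp_def by auto
    moreover have "x ** p = (x ** p ** minv x) ** x" using i by (simp add: inv3_def matrix_mul_assoc[symmetric])
    ultimately show ?thesis by blast
  qed
  obtain p1 where p1: "p1 \<in> P1 G" "elem 1 2 1 ** x = x ** p1" using bk[OF elem_P1(1)] by blast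
  obtain p2 where p2: "p2 \<in> P1 G" "elem 1 3 1 ** x = x ** p2" using bk[OF elem_P1(2)] by blast
  obtain p3 where p3: "p3 \<in> P1 G" "x ** elem 2 3 1 = p3 ** x" using fw[OF elem_P1(3)] by blast
  have "x$2$1 = x$2$1 * p1$1$1" "x$1$1 + x$2$1 = x$1$1 * p1$1$1"
    using arg_cong[OF p1(2), of "\<lambda>m. m$2$1"] arg_cong[OF p1(2), of "\<lambda>m. m$1$1"] p1(1)
    by (simp_all add: mult_nth elem_def P1_eq upper_def)
  then have x21: "x$2$1 = 0" by (rule aux_col)
  have "x$3$1 = x$3$1 * p2$1$1" "x$1$1 + x$3$1 = x$1$1 * p2$1$1"
    using arg_cong[OF p2(2), of "\<lambda>m. m$3$1"] arg_cong[OF p2(2), of "\<lambda>m. m$1$1"] p2(1)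
    by (simp_all add: mult_nth elem_def P1_eq upper_def)
  then have x31: "x$3$1 = 0" by (rule aux_col)
  have "x$3$2 = p3$3$3 * x$3$2" "x$3$3 + x$3$2 = p3$3$3 * x$3$3"
    using arg_cong[OF p3(2), of "\<lambda>m. m$3$2"] arg_cong[OF p3(2), of "\<lambda>m. m$3$3"] p3(1)
    by (simp_all add: mult_nth elem_def P1_eq upper_def add.commute)
  then have x32: "x$3$2 = 0" by (rule aux_row)
  show ?thesis using x x21 x31 x32 by (simp add: P1_eq upper_def)
qed

lemma conjgrp_inv_eq: assumes "inv3 b b'" "conjgrp a X = conjgrp b X" "inv3 a a'"
  shows "conjgrp (minv b ** a) X = X"
proof -
  have ib: "inv3 (minv b) b" using assms(1) by (metis inv3_minv inv3_sym)
  have "conjgrp (minv b ** a) X = conjgrp (minv b) (conjgrp a X)"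
    using conjgrp_conjgrp[OF ib assms(3)] by simp
  also have "\<dots> = conjgrp (minv b) (conjgrp b X)" using assms by simp
  also have "\<dots> = conjgrp (minv b ** b) X" using conjgrp_conjgrp[OF ib assms(1)] by simp
  also have "\<dots> = X" using ib by (simp add: inv3_def conjgrp_one)
  finally show ?thesis .
qed

lemma normP1': "a \<in> G \<Longrightarrow> b \<in> G \<Longrightarrow> conjgrp a (P1 G) = conjgrp b (P1 G) \<Longrightarrow> minv b ** a \<in> P1 G"
proof -
  assume a: "a \<in> G" and b: "b \<in> G" and c: "conjgrp a (P1 G) = conjgrp b (P1 G)"
  have "minv b ** a \<in> G" using a b by (simp add: G_mult G_minv)
  moreover have "conjgrp (minv b ** a) (P1 G) = P1 G" by (rule conjgrp_inv_eq[OF G_inv[OF b] c G_inv[OF a]])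
  ultimately show ?thesis by (rule normP1)
qed

lemma normP1opp': assumes a: "a \<in> G" and b: "b \<in> G" and c: "conjgrp a (P1opp G) = conjgrp b (P1opp G)"
  shows "minv b ** a \<in> P1opp G"
proof -
  have X: "P1opp G \<subseteq> G" by (auto simp: P1opp_eq)
  have "conjgrp (sigma cj a) (P1 G) = conjgrp (sigma cj b) (P1 G)"
    using arg_cong[OF c, of "image (sigma cj)"] sigma_conjgrp[OF a X] sigma_conjgrp[OF b X]
    by (simp add: sigma_P1opp)
  then have "minv (sigma cj b) ** sigma cj a \<in> P1 G" using normP1' a b sigma_G by blast
  then have "sigma cj (minv b ** a) \<in> P1 G" using a b
    by (simp add: sigma_mult sigma_minv G_minv)
  then have "sigma cj (sigma cj (minv b ** a)) \<in> P1opp G" using sigma_P1 by blast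
  then show ?thesis using a b by (simp add: sigma_sigma G_mult G_minv)
qed

lemma G_one: "mat 1 \<in> G"
proof -
  have "elem 1 2 (0::'a) = mat 1" by (simp add: elem_M3 mat1_M3)
  then show ?thesis using G_elem[of 1 2 0] by simp
qed

definition w2 :: "'a^3^3" where "w2 = M3 0 1 0 (-1) 0 0 0 0 1"
definition w2' :: "'a^3^3" where "w2' = M3 0 (-1) 0 1 0 0 0 0 1"
definition w3 :: "'a^3^3" where "w3 = M3 0 0 1 (-1) 0 0 0 (-1) 0"
definition w3' :: "'a^3^3" where "w3' = M3 0 (-1) 0 0 0 (-1) 1 0 0"

lemma inv3_w2: "inv3 w2 w2'" by (simp add: inv3_def w2_def w2'_def M3_mult mat1_M3)
lemma inv3_w3: "inv3 w3 w3'" by (simp add: inv3_def w3_def w3'_def M3_mult mat1_M3)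

lemma w2_G: "w2 \<in> G"
proof -
  have "(w2::'a^3^3) = elem 1 2 1 ** elem 2 1 (-1) ** elem 1 2 1" by (simp add: w2_def elem_M3 M3_mult)
  moreover have "elem 1 2 (1::'a) \<in> G" "elem 2 1 (-1::'a) \<in> G" by (simp_all add: G_elem)
  ultimately show ?thesis by (metis G_mult)
qed

lemma w3_G: "w3 \<in> G"
proof -
  have "(w3::'a^3^3) = (elem 1 2 1 ** elem 2 1 (-1) ** elem 1 2 1) ** (elem 2 3 1 ** elem 3 2 (-1) ** elem 2 3 1)"
    by (simp add: w3_def elem_M3 M3_mult)
  moreover have "elem 1 2 (1::'a) \<in> G" "elem 2 1 (-1::'a) \<in> G" "elem 2 3 (1::'a) \<in> G" "elem 3 2 (-1::'a) \<in> G"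
    by (simp_all add: G_elem)
  ultimately show ?thesis by (metis G_mult)
qed

lemma G_conj_M3: "g \<in> G \<Longrightarrow> inv3 a b \<Longrightarrow> a ** g ** b \<in> G" by (rule G_conj)

lemma P2_conj: "P2 G = conjgrp w2 (P1 G)"
proof
  show "conjgrp w2 (P1 G) \<subseteq> P2 G"
  proof
    fix q assume "q \<in> conjgrp w2 (P1 G)"
    then obtain p where p: "p \<in> G" "upper p" "q = w2 ** p ** w2'"
      unfolding conjgrp_def P1_eq using minv_eq[OF inv3_w2] by auto
    have "q \<in> G" using p G_conj[OF p(1) inv3_w2] by simp
    moreover have "q$1$2 = 0 \<and> q$3$1 = 0 \<and> q$3$2 = 0" using p
      by (subst (asm) M3_eta[of p]) (simp add: w2_def w2'_def M3_mult upper_def)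
    ultimately show "q \<in> P2 G" by (simp add: P2_def)
  qed
  show "P2 G \<subseteq> conjgrp w2 (P1 G)"
  proof
    fix q assume q: "q \<in> P2 G"
    let ?p = "w2' ** q ** w2"
    have "?p \<in> G" using q G_conj[OF _ inv3_sym[OF inv3_w2]] by (simp add: P2_def)
    moreover have "upper ?p" using q
      by (subst M3_eta[of q]) (simp add: w2_def w2'_def M3_mult upper_def P2_def)
    moreover have "q = w2 ** ?p ** minv w2" using inv3_w2 minv_eq[OF inv3_w2]
      by (simp add: inv3_def matrix_mul_assoc inv3_cancel)
    ultimately show "q \<in> conjgrp w2 (P1 G)" unfolding conjgrp_def P1_eq by blast
  qed
qed

lemma P3_conj: "P3 G = conjgrp w3 (P1 G)"
proof
  show "conjgrp w3 (P1 G) \<subseteq> P3 G"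
  proof
    fix q assume "q \<in> conjgrp w3 (P1 G)"
    then obtain p where p: "p \<in> G" "upper p" "q = w3 ** p ** w3'"
      unfolding conjgrp_def P1_eq using minv_eq[OF inv3_w3] by auto
    have "q \<in> G" using p G_conj[OF p(1) inv3_w3] by simp
    moreover have "q$1$2 = 0 \<and> q$1$3 = 0 \<and> q$3$2 = 0" using p
      by (subst (asm) M3_eta[of p]) (simp add: w3_def w3'_def M3_mult upper_def)
    ultimately show "q \<in> P3 G" by (simp add: P3_def)
  qed
  show "P3 G \<subseteq> conjgrp w3 (P1 G)"
  proof
    fix q assume q: "q \<in> P3 G"
    let ?p = "w3' ** q ** w3"
    have "?p \<in> G" using q G_conj[OF _ inv3_sym[OF inv3_w3]] by (simp add: P3_def)
    moreover have "upper ?p" using q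
      by (subst M3_eta[of q]) (simp add: w3_def w3'_def M3_mult upper_def P3_def)
    moreover have "q = w3 ** ?p ** minv w3" using inv3_w3 minv_eq[OF inv3_w3]
      by (simp add: inv3_def matrix_mul_assoc inv3_cancel)
    ultimately show "q \<in> conjgrp w3 (P1 G)" unfolding conjgrp_def P1_eq by blast
  qed
qed

definition dgi :: "'a \<Rightarrow> 'a \<Rightarrow> 'a \<Rightarrow> 'a^3^3" where "dgi x y z = dg (dinv x) (dinv y) (dinv z)"

lemma inv3_dg: "x \<noteq> 0 \<Longrightarrow> y \<noteq> 0 \<Longrightarrow> z \<noteq> 0 \<Longrightarrow> inv3 (dg x y z) (dgi x y z)"
  by (simp add: inv3_def dgi_def dg_M3 M3_mult mat1_M3 dinv_l dinv_r)

lemma dinv_nz: "x \<noteq> 0 \<Longrightarrow> dinv x \<noteq> 0"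
  using dinv_r[of x] one_neq_zero' by auto

lemma conj_dg_gen:
  assumes nz: "x \<noteq> 0" "y \<noteq> 0" "z \<noteq> 0"
    and X: "X = {g \<in> G. \<forall>(i,j)\<in>Z. g$i$j = 0}"
  shows "conjgrp (dg x y z) X = X"
proof -
  have i: "inv3 (dg x y z) (dgi x y z)" using inv3_dg nz by blast
  have ent: "(dg a b c ** g ** dg a' b' c') $ i $ j =
      (if i = 1 then a else if i = 2 then b else c) * g$i$j * (if j = 1 then a' else if j = 2 then b' else c')"
    for a b c a' b' c' :: 'a and g i j
    using exhaust_3[of i] exhaust_3[of j] by (auto simp: mult_nth dg_def mult.assoc)
  have nzs: "(if i = 1 then x else if i = 2 then y else z) \<noteq> 0"
     "(if i = 1 then dinv x else if i = 2 then dinv y else dinv z) \<noteq> 0" for i::3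
    using nz dinv_nz by auto
  show ?thesis
  proof
    show "conjgrp (dg x y z) X \<subseteq> X"
      unfolding conjgrp_def minv_eq[OF i] dgi_def X
      using G_conj[OF _ i[unfolded dgi_def]] by (auto simp: ent)
    show "X \<subseteq> conjgrp (dg x y z) X"
    proof
      fix q assume q: "q \<in> X"
      let ?p = "dgi x y z ** q ** dg x y z"
      have "?p \<in> X" using q G_conj[OF _ inv3_sym[OF i]] nzs unfolding X dgi_def by (auto simp: ent)
      moreover have "q = dg x y z ** ?p ** minv (dg x y z)" using i minv_eq[OF i]
        by (simp add: inv3_def matrix_mul_assoc inv3_cancel)
      ultimately show "q \<in> conjgrp (dg x y z) X" unfolding conjgrp_def by blast
    qed
  qed
qed

lemma P1_Z: "P1 G = {g \<in> G. \<forall>(i,j)\<in>{(2,1),(3,1),(3,2)}. g$i$j = 0}" by (auto simp: P1_def)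
lemma P2_Z: "P2 G = {g \<in> G. \<forall>(i,j)\<in>{(1,2),(3,1),(3,2)}. g$i$j = 0}" by (auto simp: P2_def)
lemma P3_Z: "P3 G = {g \<in> G. \<forall>(i,j)\<in>{(1,2),(1,3),(3,2)}. g$i$j = 0}" by (auto simp: P3_def)
lemma P1opp_Z: "P1opp G = {g \<in> G. \<forall>(i,j)\<in>{(1,2),(1,3),(2,3)}. g$i$j = 0}" by (auto simp: P1opp_def)

lemmas conj_dg = conj_dg_gen[OF _ _ _ P1_Z] conj_dg_gen[OF _ _ _ P2_Z] conj_dg_gen[OF _ _ _ P3_Z]
  conj_dg_gen[OF _ _ _ P1opp_Z]

lemma sigma_w2: "sigma cj w2 = w2 ** dg (-1) (-1) 1"
  unfolding sigma_def' minv_eq[OF inv3_w2] by (simp add: w2_def w2'_def ctrans_M3 Jmat_M3 M3_mult dg_M3 cj_minus)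

lemma sigma_w3: "sigma cj w3 = w3 ** dg (-1) 1 (-1)"
  unfolding sigma_def' minv_eq[OF inv3_w3] by (simp add: w3_def w3'_def ctrans_M3 Jmat_M3 M3_mult dg_M3 cj_minus)

lemma dg_one: "dg 1 1 1 = (mat 1 :: 'a^3^3)" by (simp add: dg_M3 mat1_M3)

lemma opp_lemma: assumes w: "w \<in> G" and s: "sigma cj w = w ** dg x y z" and nz: "x \<noteq> 0" "y \<noteq> 0" "z \<noteq> 0"
  shows "conjgrp w (P1 G) \<in> sigma_parabolics cj G"
proof -
  have X: "P1 G \<subseteq> G" by (auto simp: P1_eq)
  have "sigma cj ` conjgrp w (P1 G) = conjgrp (w ** dg x y z) (P1opp G)"
    using sigma_conjgrp[OF w X] s by (simp add: sigma_P1)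
  also have "\<dots> = conjgrp w (conjgrp (dg x y z) (P1opp G))"
    using conjgrp_conjgrp[OF G_inv[OF w] inv3_dg[OF nz]] by simp
  also have "\<dots> = conjgrp w (P1opp G)" using conj_dg(4)[OF nz] by simp
  finally have "opposite G (conjgrp w (P1 G)) (sigma cj ` conjgrp w (P1 G))"
    unfolding opposite_def using w by blast
  moreover have "conjgrp w (P1 G) \<in> minparabolics G" unfolding minparabolics_def using w by blast
  ultimately show ?thesis unfolding sigma_parabolics_def by blast
qed

lemma P1_sp: "P1 G \<in> sigma_parabolics cj G"
  using opp_lemma[OF G_one, of 1 1 1] by (simp add: conjgrp_one sigma_one dg_one one_neq_zero')

lemma P2_sp: "P2 G \<in> sigma_parabolics cj G"
  using opp_lemma[OF w2_G sigma_w2] by (simp add: P2_conj one_neq_zero')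

lemma P3_sp: "P3 G \<in> sigma_parabolics cj G"
  using opp_lemma[OF w3_G sigma_w3] by (simp add: P3_conj one_neq_zero')

lemma dg_mult: "dg a b c ** dg a' b' c' = dg (a*a') (b*b') (c*c')"
  by (simp add: dg_M3 M3_mult)

lemma ctrans_dg: "ctrans cj (dg a b c) = dg (cj a) (cj b) (cj c)"
  by (simp add: dg_M3 ctrans_M3)

lemma J_dg: "Jmat = dg 1 (-1) (-1)" by (simp add: Jmat_M3 dg_M3)

lemma choose_pair: "\<exists>\<alpha> \<beta>::'a. a * \<alpha> + b * \<beta> = 0 \<and> (\<alpha> \<noteq> 0 \<or> \<beta> \<noteq> 0)"
proof (cases "b = 0")
  case True then show ?thesis by (intro exI[of _ 0] exI[of _ 1]) (simp add: one_neq_zero')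
next
  case False
  have "a * 1 + b * (- (dinv b * a)) = 0"
    by (simp add: mult.assoc[symmetric] dinv_r[OF False])
  then show ?thesis by (intro exI[of _ 1] exI[of _ "- (dinv b * a)"]) (simp add: one_neq_zero')
qed

lemma nrm_pos: "x \<noteq> 0 \<Longrightarrow> 0 < nrm x"
  using nrm_nonneg[of x] nrm_eq0_iff[of x] by linarith

lemma rl_sum3: "rl a + rl b + rl c = rl (a + b + c)" by (simp add: rl_add)

lemma cj_rl_mult: "cj u * rl r * u = rl (r * nrm u)"
  by (metis mult.assoc nrm_l rl_comm rl_mult)

lemma sig_aux:
  assumes Y: "ctrans cj k ** Jmat ** k = dg (rl r1) (rl r2) (rl r3)"
    and v: "k$1$1 * u1 + k$1$2 * u2 + k$1$3 * u3 = 0"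
  shows "r1 * nrm u1 + r2 * nrm u2 + r3 * nrm u3 \<le> 0"
proof -
  let ?U = "M3 u1 0 0 u2 0 0 u3 0 0"
  have e: "ctrans cj (k ** ?U) ** Jmat ** (k ** ?U) = ctrans cj ?U ** (ctrans cj k ** Jmat ** k) ** ?U"
    by (simp add: ctrans_mult matrix_mul_assoc)
  define v2 where "v2 = (k ** ?U)$2$1"
  define v3 where "v3 = (k ** ?U)$3$1"
  have v1: "(k ** ?U)$1$1 = 0" using v by (simp add: mult_nth)
  have "(ctrans cj (k ** ?U) ** Jmat ** (k ** ?U))$1$1 = - (cj v2 * v2) - cj v3 * v3"
    by (simp add: mult_nth ctrans_def Jmat_def v v2_def v3_def)
  also have "\<dots> = rl (- (nrm v2 + nrm v3))" by (simp add: nrm_l rl_diff rl_minus)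
  finally have 1: "(ctrans cj (k ** ?U) ** Jmat ** (k ** ?U))$1$1 = rl (- (nrm v2 + nrm v3))" .
  have "(ctrans cj ?U ** (ctrans cj k ** Jmat ** k) ** ?U)$1$1 = cj u1 * rl r1 * u1 + cj u2 * rl r2 * u2 + cj u3 * rl r3 * u3"
    unfolding Y by (simp add: ctrans_M3 dg_M3 M3_mult)
  also have "\<dots> = rl (r1 * nrm u1 + r2 * nrm u2 + r3 * nrm u3)" by (simp add: cj_rl_mult rl_sum3)
  finally have "rl (- (nrm v2 + nrm v3)) = rl (r1 * nrm u1 + r2 * nrm u2 + r3 * nrm u3)" using e 1 by simp
  then have "- (nrm v2 + nrm v3) = r1 * nrm u1 + r2 * nrm u2 + r3 * nrm u3" by (rule rl_inj)
  moreover have "0 \<le> nrm v2 + nrm v3" by simp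
  ultimately show ?thesis by linarith
qed

lemma sig_one_pos:
  assumes Y: "ctrans cj k ** Jmat ** k = dg (rl r1) (rl r2) (rl r3)" and i: "inv3 k k'"
  shows "0 < r1 \<or> 0 < r2 \<or> 0 < r3"
proof -
  have "ctrans cj k' ** (ctrans cj k ** Jmat ** k) ** k' = Jmat"
  proof -
    have "ctrans cj k' ** ctrans cj k = mat 1" using inv3_ctrans[OF i] by (simp add: inv3_def)
    then show ?thesis using i unfolding inv3_def by (metis matrix_mul_assoc matrix_mul_lid matrix_mul_rid)
  qed
  then have "(ctrans cj k' ** dg (rl r1) (rl r2) (rl r3) ** k')$1$1 = 1" unfolding Y by (simp add: Jmat_def)
  then have "cj (k'$1$1) * rl r1 * k'$1$1 + cj (k'$2$1) * rl r2 * k'$2$1 + cj (k'$3$1) * rl r3 * k'$3$1 = 1"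
    by (simp add: mult_nth ctrans_def dg_def)
  then have "rl (r1 * nrm (k'$1$1) + r2 * nrm (k'$2$1) + r3 * nrm (k'$3$1)) = rl 1"
    by (simp add: cj_rl_mult rl_sum3)
  then have e: "r1 * nrm (k'$1$1) + r2 * nrm (k'$2$1) + r3 * nrm (k'$3$1) = 1" by (rule rl_inj)
  show ?thesis
  proof (rule ccontr)
    assume "\<not> ?thesis"
    then have "r1 * nrm (k'$1$1) \<le> 0" "r2 * nrm (k'$2$1) \<le> 0" "r3 * nrm (k'$3$1) \<le> 0"
      by (simp_all add: mult_nonpos_nonneg)
    then show False using e by linarith
  qed
qed

lemma sig_not_two:
  assumes Y: "ctrans cj k ** Jmat ** k = dg (rl r1) (rl r2) (rl r3)"
  shows "\<not> (0 < r1 \<and> 0 < r2)" "\<not> (0 < r1 \<and> 0 < r3)" "\<not> (0 < r2 \<and> 0 < r3)"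
proof -
  have pos: "0 < ra * nrm \<alpha> + rb * nrm \<beta>" if "0 < ra" "0 < rb" "\<alpha> \<noteq> 0 \<or> \<beta> \<noteq> 0" for ra rb and \<alpha> \<beta> :: 'a
  proof -
    have "0 \<le> ra * nrm \<alpha>" "0 \<le> rb * nrm \<beta>" using that by simp_all
    moreover have "0 < ra * nrm \<alpha> \<or> 0 < rb * nrm \<beta>" using that nrm_pos by auto
    ultimately show ?thesis by linarith
  qed
  obtain a b :: 'a where ab: "k$1$1 * a + k$1$2 * b = 0" "a \<noteq> 0 \<or> b \<noteq> 0" using choose_pair by blast
  have "r1 * nrm a + r2 * nrm b + r3 * nrm 0 \<le> 0" using sig_aux[OF Y, of a b 0] ab by simp
  then show "\<not> (0 < r1 \<and> 0 < r2)" using pos[of r1 r2 a b] ab by auto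
  obtain a b :: 'a where ab: "k$1$1 * a + k$1$3 * b = 0" "a \<noteq> 0 \<or> b \<noteq> 0" using choose_pair by blast
  have "r1 * nrm a + r2 * nrm 0 + r3 * nrm b \<le> 0" using sig_aux[OF Y, of a 0 b] ab by simp
  then show "\<not> (0 < r1 \<and> 0 < r3)" using pos[of r1 r3 a b] ab by auto
  obtain a b :: 'a where ab: "k$1$2 * a + k$1$3 * b = 0" "a \<noteq> 0 \<or> b \<noteq> 0" using choose_pair by blast
  have "r1 * nrm 0 + r2 * nrm a + r3 * nrm b \<le> 0" using sig_aux[OF Y, of 0 a b] ab by simp
  then show "\<not> (0 < r2 \<and> 0 < r3)" using pos[of r2 r3 a b] ab by auto
qed

lemma sgn_aux: "(r::real) \<noteq> 0 \<Longrightarrow> (1 / sqrt \<bar>r\<bar>) * r * (1 / sqrt \<bar>r\<bar>) = sgn r"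
proof -
  assume r: "r \<noteq> 0"
  have "sqrt \<bar>r\<bar> * sqrt \<bar>r\<bar> = \<bar>r\<bar>" by simp
  then have "(1 / sqrt \<bar>r\<bar>) * r * (1 / sqrt \<bar>r\<bar>) = r / \<bar>r\<bar>" by (simp add: field_simps)
  then show ?thesis using r by (simp add: sgn_if)
qed

lemma conj_S_UJ:
  assumes Y: "ctrans cj k ** Jmat ** k = dg (rl r1) (rl r2) (rl r3)"
    and nz: "r1 \<noteq> 0" "r2 \<noteq> 0" "r3 \<noteq> 0"
  defines "S \<equiv> dg (rl (1 / sqrt \<bar>r1\<bar>)) (rl (1 / sqrt \<bar>r2\<bar>)) (rl (1 / sqrt \<bar>r3\<bar>))"
  shows "ctrans cj (k ** S) ** Jmat ** (k ** S) = dg (rl (sgn r1)) (rl (sgn r2)) (rl (sgn r3))"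
proof -
  have "ctrans cj (k ** S) ** Jmat ** (k ** S) = S ** (ctrans cj k ** Jmat ** k) ** S"
    by (simp add: ctrans_mult matrix_mul_assoc S_def ctrans_dg)
  also have "\<dots> = dg (rl (1 / sqrt \<bar>r1\<bar> * r1 * (1 / sqrt \<bar>r1\<bar>))) (rl (1 / sqrt \<bar>r2\<bar> * r2 * (1 / sqrt \<bar>r2\<bar>)))
       (rl (1 / sqrt \<bar>r3\<bar> * r3 * (1 / sqrt \<bar>r3\<bar>)))"
    unfolding Y S_def dg_mult by (simp only: rl_mult)
  finally show ?thesis by (simp only: sgn_aux[OF nz(1)] sgn_aux[OF nz(2)] sgn_aux[OF nz(3)])
qed

lemma rl_sgn: "r \<noteq> 0 \<Longrightarrow> rl (sgn r) = (if 0 < r then 1 else -1)"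
  by (simp add: sgn_if rl_minus)

lemma classify: assumes P: "P \<in> sigma_parabolics cj G"
  shows "\<exists>f f'. inv3 f f' \<and> UJ f \<and> (P = conjgrp f (P1 G) \<or> P = conjgrp f (P2 G) \<or> P = conjgrp f (P3 G))"
proof -
  obtain k where k: "k \<in> G" "P = conjgrp k (P1 G)" "sigma cj ` P = conjgrp k (P1opp G)"
    using P unfolding sigma_parabolics_def opposite_def by blast
  have XP: "P1 G \<subseteq> G" by (auto simp: P1_eq)
  have "sigma cj ` P = conjgrp (sigma cj k) (P1opp G)"
    using sigma_conjgrp[OF k(1) XP] k(2) by (simp add: sigma_P1)
  then have q: "minv k ** sigma cj k \<in> P1opp G"
    using normP1opp'[OF sigma_G[OF k(1)] k(1)] k(3) by simp
  define m where "m = minv k"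
  have i: "inv3 k m" using G_inv[OF k(1)] m_def by simp
  define X where "X = m ** Jmat ** ctrans cj m"
  define Y where "Y = ctrans cj k ** Jmat ** k"
  have "X = (minv k ** sigma cj k) ** Jmat"
    unfolding X_def m_def sigma_def' by (simp add: matrix_mul_assoc)
  then have lX: "lower X" using q lower_J by (simp add: P1opp_eq lower_mult)
  have mk: "m ** k = mat 1" "k ** m = mat 1" using i by (simp_all add: inv3_def)
  have cmk: "ctrans cj m ** ctrans cj k = mat 1" "ctrans cj k ** ctrans cj m = mat 1"
    using inv3_ctrans[OF i] by (simp_all add: inv3_def)
  have "X ** Y = m ** Jmat ** (ctrans cj m ** ctrans cj k) ** Jmat ** k"
    unfolding X_def Y_def by (simp add: matrix_mul_assoc)
  then have XY: "X ** Y = mat 1" by (simp add: cmk mk)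
  have "Y ** X = ctrans cj k ** Jmat ** (k ** m) ** Jmat ** ctrans cj m"
    unfolding X_def Y_def by (simp add: matrix_mul_assoc)
  then have YX: "Y ** X = mat 1" by (simp add: cmk mk)
  have lY: "lower Y" using lower_minv[of X Y] XY YX lX by (simp add: inv3_def)
  have hY: "ctrans cj Y = Y" unfolding Y_def by (simp add: ctrans_mult matrix_mul_assoc)
  have hent: "cj (Y$j$i) = Y$i$j" for i j using arg_cong[OF hY, of "\<lambda>M. M$i$j"] by (simp add: ctrans_def)
  have Ydg: "Y = dg (Y$1$1) (Y$2$2) (Y$3$3)"
    using lY hent[of 1 2] hent[of 1 3] hent[of 2 3]
    by (subst M3_eta) (simp add: dg_M3 lower_def M3_eq)
  obtain r1 where r1: "Y$1$1 = rl r1" using selfadj hent[of 1 1] by blast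
  obtain r2 where r2: "Y$2$2 = rl r2" using selfadj hent[of 2 2] by blast
  obtain r3 where r3: "Y$3$3 = rl r3" using selfadj hent[of 3 3] by blast
  have "dg (Y$1$1) (Y$2$2) (Y$3$3) = dg (rl r1) (rl r2) (rl r3)" by (simp only: r1 r2 r3)
  then have Yd: "Y = dg (rl r1) (rl r2) (rl r3)" using Ydg by simp
  have "rl r1 * X$1$1 = 1" "rl r2 * X$2$2 = 1" "rl r3 * X$3$3 = 1"
    using arg_cong[OF YX, of "\<lambda>M. M$1$1"] arg_cong[OF YX, of "\<lambda>M. M$2$2"] arg_cong[OF YX, of "\<lambda>M. M$3$3"]
    by (simp_all add: Yd mult_nth dg_def mat_def)
  then have nz: "r1 \<noteq> 0" "r2 \<noteq> 0" "r3 \<noteq> 0" using one_neq_zero' by auto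
  have YY: "ctrans cj k ** Jmat ** k = dg (rl r1) (rl r2) (rl r3)" using Yd Y_def by simp
  define S where "S = dg (rl (1 / sqrt \<bar>r1\<bar>)) (rl (1 / sqrt \<bar>r2\<bar>)) (rl (1 / sqrt \<bar>r3\<bar>))"
  have Snz: "rl (1 / sqrt \<bar>r1\<bar>) \<noteq> 0" "rl (1 / sqrt \<bar>r2\<bar>) \<noteq> 0" "rl (1 / sqrt \<bar>r3\<bar>) \<noteq> 0"
    using nz by (simp_all add: rl_eq0)
  define f0 where "f0 = k ** S"
  have f0J: "ctrans cj f0 ** Jmat ** f0 = dg (rl (sgn r1)) (rl (sgn r2)) (rl (sgn r3))"
    unfolding f0_def S_def using conj_S_UJ[OF YY nz] by simp
  have if0: "inv3 f0 (dgi (rl (1 / sqrt \<bar>r1\<bar>)) (rl (1 / sqrt \<bar>r2\<bar>)) (rl (1 / sqrt \<bar>r3\<bar>)) ** m)"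
    unfolding f0_def S_def by (rule inv3_mult[OF i inv3_dg[OF Snz]])
  have Pf0: "P = conjgrp f0 (P1 G)"
    unfolding f0_def k(2) S_def
    using conjgrp_conjgrp[OF i inv3_dg[OF Snz], of "P1 G"] conj_dg(1)[OF Snz] by simp
  have cases: "(0 < r1 \<and> r2 < 0 \<and> r3 < 0) \<or> (r1 < 0 \<and> 0 < r2 \<and> r3 < 0) \<or> (r1 < 0 \<and> r2 < 0 \<and> 0 < r3)"
    using sig_one_pos[OF YY i] sig_not_two[OF YY] nz by linarith
  then show ?thesis
  proof (elim disjE)
    assume c: "0 < r1 \<and> r2 < 0 \<and> r3 < 0"
    have "UJ f0" using f0J c unfolding UJ_def by (simp add: rl_sgn nz J_dg rl_minus)
    then show ?thesis using if0 Pf0 by blast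
  next
    assume c: "r1 < 0 \<and> 0 < r2 \<and> r3 < 0"
    define f where "f = f0 ** w2'"
    have "ctrans cj f ** Jmat ** f = ctrans cj w2' ** (ctrans cj f0 ** Jmat ** f0) ** w2'"
      unfolding f_def by (simp add: ctrans_mult matrix_mul_assoc)
    also have "\<dots> = Jmat" unfolding f0J using c nz
      by (simp add: rl_sgn w2'_def ctrans_M3 dg_M3 M3_mult Jmat_M3 cj_minus rl_minus)
    finally have "UJ f" unfolding UJ_def .
    moreover have "inv3 f (w2 ** (dgi (rl (1 / sqrt \<bar>r1\<bar>)) (rl (1 / sqrt \<bar>r2\<bar>)) (rl (1 / sqrt \<bar>r3\<bar>)) ** m))"
      unfolding f_def by (rule inv3_mult[OF if0 inv3_sym[OF inv3_w2]])
    moreover have "P = conjgrp f (P2 G)"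
    proof -
      have "conjgrp f (P2 G) = conjgrp (f ** w2) (P1 G)"
        unfolding P2_conj using conjgrp_conjgrp[OF calculation(2) inv3_w2] by simp
      also have "f ** w2 = f0" unfolding f_def by (rule inv3_cancel(2)[OF inv3_w2])
      finally show ?thesis using Pf0 by simp
    qed
    ultimately show ?thesis by blast
  next
    assume c: "r1 < 0 \<and> r2 < 0 \<and> 0 < r3"
    define f where "f = f0 ** w3'"
    have "ctrans cj f ** Jmat ** f = ctrans cj w3' ** (ctrans cj f0 ** Jmat ** f0) ** w3'"
      unfolding f_def by (simp add: ctrans_mult matrix_mul_assoc)
    also have "\<dots> = Jmat" unfolding f0J using c nz
      by (simp add: rl_sgn w3'_def ctrans_M3 dg_M3 M3_mult Jmat_M3 cj_minus rl_minus)
    finally have "UJ f" unfolding UJ_def .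
    moreover have "inv3 f (w3 ** (dgi (rl (1 / sqrt \<bar>r1\<bar>)) (rl (1 / sqrt \<bar>r2\<bar>)) (rl (1 / sqrt \<bar>r3\<bar>)) ** m))"
      unfolding f_def by (rule inv3_mult[OF if0 inv3_sym[OF inv3_w3]])
    moreover have "P = conjgrp f (P3 G)"
    proof -
      have "conjgrp f (P3 G) = conjgrp (f ** w3) (P1 G)"
        unfolding P3_conj using conjgrp_conjgrp[OF calculation(2) inv3_w3] by simp
      also have "f ** w3 = f0" unfolding f_def by (rule inv3_cancel(2)[OF inv3_w3])
      finally show ?thesis using Pf0 by simp
    qed
    ultimately show ?thesis by blast
  qed
qed

lemma c_mult: "continuous_on S f \<Longrightarrow> continuous_on S g \<Longrightarrow> continuous_on S (\<lambda>x. f x * g x)"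
  for f g :: "'b::topological_space \<Rightarrow> 'a"
proof -
  assume f: "continuous_on S f" and g: "continuous_on S g"
  have "continuous_on S (\<lambda>x. (\<lambda>p. fst p * snd p) ((\<lambda>x. (f x, g x)) x))"
    by (rule continuous_on_compose2[OF cont_mult continuous_on_Pair[OF f g]]) auto
  then show ?thesis by simp
qed

lemma c_add: "continuous_on S f \<Longrightarrow> continuous_on S g \<Longrightarrow> continuous_on S (\<lambda>x. f x + g x)"
  for f g :: "'b::topological_space \<Rightarrow> 'a"
proof -
  assume f: "continuous_on S f" and g: "continuous_on S g"
  have "continuous_on S (\<lambda>x. (\<lambda>p. fst p + snd p) ((\<lambda>x. (f x, g x)) x))"
    by (rule continuous_on_compose2[OF cont_add continuous_on_Pair[OF f g]]) auto
  then show ?thesis by simp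
qed

lemma c_cj: "continuous_on S f \<Longrightarrow> continuous_on S (\<lambda>x. cj (f x))"
  for f :: "'b::topological_space \<Rightarrow> 'a"
  by (rule continuous_on_compose2[OF cont_cj]) auto

lemma c_rl: "continuous_on S f \<Longrightarrow> continuous_on S (\<lambda>x. rl (f x))"
  for f :: "'b::topological_space \<Rightarrow> real"
  by (rule continuous_on_compose2[OF cont_rl]) auto

lemma c_minus: "continuous_on S f \<Longrightarrow> continuous_on S (\<lambda>x. - f x)"
  for f :: "'b::topological_space \<Rightarrow> 'a"
proof -
  assume f: "continuous_on S f"
  have "continuous_on S (\<lambda>x. rl (-1) * f x)" by (intro c_mult f continuous_on_const)
  then show ?thesis by (simp add: rl_minus)
qed

lemma c_entry: "continuous_on S A \<Longrightarrow> continuous_on S (\<lambda>x. A x $ i $ j)"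
  for A :: "'b::topological_space \<Rightarrow> 'a^3^3"
  unfolding continuous_on_def by (auto intro!: tendsto_vec_nth)

lemma c_mat: "(\<And>i j. continuous_on S (\<lambda>x. F x i j)) \<Longrightarrow> continuous_on S (\<lambda>x. (\<chi> i j. F x i j) :: 'a^3^3)"
  for F :: "'b::topological_space \<Rightarrow> 3 \<Rightarrow> 3 \<Rightarrow> 'a"
  unfolding continuous_on_def by (auto intro!: tendsto_vec_lambda)

lemma c_matmul: "continuous_on S A \<Longrightarrow> continuous_on S B \<Longrightarrow> continuous_on S (\<lambda>x. A x ** B x)"
  for A B :: "'b::topological_space \<Rightarrow> 'a^3^3"
proof -
  assume A: "continuous_on S A" and B: "continuous_on S B"
  have e: "(\<lambda>x. A x ** B x) = (\<lambda>x. \<chi> i j. A x$i$1 * B x$1$j + A x$i$2 * B x$2$j + A x$i$3 * B x$3$j)"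
    by (rule ext) (simp add: vec_eq_iff mult_nth)
  show ?thesis unfolding e
    by (intro c_mat c_add c_mult c_entry A B)
qed

lemma c_M3: "continuous_on S a \<Longrightarrow> continuous_on S b \<Longrightarrow> continuous_on S c \<Longrightarrow>
  continuous_on S d \<Longrightarrow> continuous_on S e \<Longrightarrow> continuous_on S f \<Longrightarrow>
  continuous_on S g \<Longrightarrow> continuous_on S h \<Longrightarrow> continuous_on S i \<Longrightarrow>
  continuous_on S (\<lambda>x. M3 (a x) (b x) (c x) (d x) (e x) (f x) (g x) (h x) (i x))"
  for a b c d e f g h i :: "'b::topological_space \<Rightarrow> 'a"
  unfolding M3_def apply (intro c_mat)
  subgoal for r s by (cases "r = 1"; cases "r = 2"; cases "s = 1"; cases "s = 2") simp_all
  done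

abbreviation "KK \<equiv> {g \<in> G. sigma cj g = g}"

lemma H_sub: "Hgrp cj G \<subseteq> KK"
  unfolding Hgrp_def by (rule connected_component_subset)

lemma H_G: "h \<in> Hgrp cj G \<Longrightarrow> h \<in> G" using H_sub by blast
lemma H_UJ: "h \<in> Hgrp cj G \<Longrightarrow> UJ h" using H_sub sigma_fix_iff by blast

lemma one_H: "mat 1 \<in> Hgrp cj G"
  unfolding Hgrp_def using G_one sigma_one by (simp add: connected_component_refl)

lemma KK_mult: "a \<in> KK \<Longrightarrow> b \<in> KK \<Longrightarrow> a ** b \<in> KK"
  by (simp add: G_mult sigma_mult)

lemma KK_minv: "a \<in> KK \<Longrightarrow> minv a \<in> KK"
  by (simp add: G_minv sigma_minv)

lemma H_mult: assumes h: "h \<in> Hgrp cj G" and k: "k \<in> Hgrp cj G" shows "h ** k \<in> Hgrp cj G"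
proof -
  let ?C = "connected_component_set KK (mat 1)"
  have cC: "connected ?C" by simp
  have cont: "continuous_on ?C (\<lambda>p. h ** p)" by (intro c_matmul continuous_on_const continuous_on_id)
  have sub: "(\<lambda>p. h ** p) ` ?C \<subseteq> KK" using H_sub h connected_component_subset KK_mult
    unfolding Hgrp_def by blast
  have hin: "h \<in> (\<lambda>p. h ** p) ` ?C" using one_H unfolding Hgrp_def
    by (metis (no_types, lifting) image_eqI matrix_mul_rid)
  have "(\<lambda>p. h ** p) ` ?C \<subseteq> connected_component_set KK h"
    by (rule connected_component_maximal[OF hin connected_continuous_image[OF cont cC] sub])
  also have "\<dots> = ?C" using h unfolding Hgrp_def by (rule connected_component_eq)
  finally show ?thesis using k unfolding Hgrp_def by blast
qed

lemma H_minv: assumes h: "h \<in> Hgrp cj G" shows "minv h \<in> Hgrp cj G"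
proof -
  let ?C = "connected_component_set KK (mat 1)"
  have cC: "connected ?C" by simp
  have cont: "continuous_on ?C (\<lambda>p. minv h ** p)" by (intro c_matmul continuous_on_const continuous_on_id)
  have hK: "minv h \<in> KK" using H_sub h KK_minv by blast
  have sub: "(\<lambda>p. minv h ** p) ` ?C \<subseteq> KK" using hK connected_component_subset KK_mult by blast
  have i: "inv3 h (minv h)" using G_inv H_G h by blast
  have "mat 1 \<in> (\<lambda>p. minv h ** p) ` ?C" using h i unfolding Hgrp_def inv3_def
    by (metis (no_types, lifting) image_eqI)
  then have "(\<lambda>p. minv h ** p) ` ?C \<subseteq> ?C"
    by (rule connected_component_maximal[OF _ connected_continuous_image[OF cont cC] sub])
  moreover have "minv h \<in> (\<lambda>p. minv h ** p) ` ?C" using one_H unfolding Hgrp_def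
    by (metis (no_types, lifting) image_eqI matrix_mul_rid)
  ultimately show ?thesis unfolding Hgrp_def by blast
qed

lemma path_H:
  fixes \<gamma> :: "real \<Rightarrow> 'a^3^3"
  assumes c: "continuous_on {0..1} \<gamma>" and m: "\<And>t. t \<in> {0..1} \<Longrightarrow> \<gamma> t \<in> G \<and> UJ (\<gamma> t)"
    and z: "\<gamma> 0 = mat 1"
  shows "\<gamma> 1 \<in> Hgrp cj G"
proof -
  have sub: "\<gamma> ` {0..1} \<subseteq> KK" using m sigma_fix_iff by auto
  have one: "mat 1 \<in> \<gamma> ` {0..1}" by (rule image_eqI[of _ \<gamma> 0]) (simp_all add: z)
  have "\<gamma> ` {0..1} \<subseteq> connected_component_set KK (mat 1)"
    by (rule connected_component_maximal[OF one connected_continuous_image[OF c connected_Icc] sub])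
  moreover have "\<gamma> 1 \<in> \<gamma> ` {0..1}" by (rule imageI) simp
  ultimately show ?thesis unfolding Hgrp_def by blast
qed

lemma Horbit_conj: assumes h: "h \<in> Hgrp cj G" shows "Horbit cj G (conjgrp h X) = Horbit cj G X"
proof -
  have ih: "inv3 h (minv h)" using G_inv H_G h by blast
  have "conjgrp k (conjgrp h X) = conjgrp (k ** h) X" if "k \<in> Hgrp cj G" for k
    using conjgrp_conjgrp[OF G_inv[OF H_G[OF that]] ih] .
  moreover have "conjgrp k X = conjgrp (k ** minv h) (conjgrp h X)" if k: "k \<in> Hgrp cj G" for k
  proof -
    have ik: "inv3 (k ** minv h) (h ** minv k)"
      using inv3_mult[OF G_inv[OF H_G[OF k]] inv3_sym[OF ih]] .
    have "conjgrp (k ** minv h) (conjgrp h X) = conjgrp (k ** minv h ** h) X"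
      using conjgrp_conjgrp[OF ik ih] .
    also have "k ** minv h ** h = k" using inv3_cancel(2)[OF ih] .
    finally show ?thesis by simp
  qed
  note A = calculation this
  show ?thesis unfolding Horbit_def
  proof (rule set_eqI, rule iffI)
    fix Y assume "Y \<in> {conjgrp k (conjgrp h X) |k. k \<in> Hgrp cj G}"
    then obtain k where k: "k \<in> Hgrp cj G" "Y = conjgrp k (conjgrp h X)" by blast
    then have "Y = conjgrp (k ** h) X" using A(1) by simp
    moreover have "k ** h \<in> Hgrp cj G" using H_mult[OF k(1) h] .
    ultimately show "Y \<in> {conjgrp k X |k. k \<in> Hgrp cj G}" by blast
  next
    fix Y assume "Y \<in> {conjgrp k X |k. k \<in> Hgrp cj G}"
    then obtain k where k: "k \<in> Hgrp cj G" "Y = conjgrp k X" by blast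
    then have "Y = conjgrp (k ** minv h) (conjgrp h X)" using A(2) by simp
    moreover have "k ** minv h \<in> Hgrp cj G" using H_mult[OF k(1) H_minv[OF h]] .
    ultimately show "Y \<in> {conjgrp k (conjgrp h X) |k. k \<in> Hgrp cj G}" by blast
  qed
qed

lemma w12_G: assumes "u * v = 1" "v * u = 1" shows "M3 0 u 0 (-v) 0 0 0 0 1 \<in> G"
proof -
  have "M3 0 u 0 (-v) 0 0 0 0 1 = elem 1 2 u ** elem 2 1 (-v) ** elem 1 2 u"
    using assms by (simp add: elem_M3 M3_mult algebra_simps)
  moreover have "elem 1 2 u \<in> G" "elem 2 1 (-v) \<in> G" by (simp_all add: G_elem)
  ultimately show ?thesis by (metis G_mult)
qed

lemma w23_G: assumes "u * v = 1" "v * u = 1" shows "M3 1 0 0 0 0 u 0 (-v) 0 \<in> G"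
proof -
  have "M3 1 0 0 0 0 u 0 (-v) 0 = elem 2 3 u ** elem 3 2 (-v) ** elem 2 3 u"
    using assms by (simp add: elem_M3 M3_mult algebra_simps)
  moreover have "elem 2 3 u \<in> G" "elem 3 2 (-v) \<in> G" by (simp_all add: G_elem)
  ultimately show ?thesis by (metis G_mult)
qed

lemma dg12_G: assumes "u * v = 1" "v * u = 1" shows "dg u v 1 \<in> G"
proof -
  have "dg u v 1 = M3 0 u 0 (-v) 0 0 0 0 1 ** M3 0 (-1) 0 (- (-1)) 0 0 0 0 1"
    by (simp add: dg_M3 M3_mult)
  moreover have "M3 0 (-1) 0 (- (-1)) 0 0 0 0 (1::'a) \<in> G" by (rule w12_G) simp_all
  ultimately show ?thesis using w12_G[OF assms] by (metis G_mult)
qed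

lemma dg23_G: assumes "u * v = 1" "v * u = 1" shows "dg 1 u v \<in> G"
proof -
  have "dg 1 u v = M3 1 0 0 0 0 u 0 (-v) 0 ** M3 1 0 0 0 0 (-1) 0 (- (-1)) 0"
    by (simp add: dg_M3 M3_mult)
  moreover have "M3 1 0 0 0 0 (-1) 0 (- (-1)) (0::'a) \<in> G" by (rule w23_G) simp_all
  ultimately show ?thesis using w23_G[OF assms] by (metis G_mult)
qed

lemma rl_inv_l: "r \<noteq> 0 \<Longrightarrow> rl r * rl (1/r) = 1" by (simp add: rl_mult[symmetric])
lemma rl_inv_r: "r \<noteq> 0 \<Longrightarrow> rl (1/r) * rl r = 1" by (simp add: rl_mult[symmetric])

definition Bst :: "real \<Rightarrow> 'a^3^3" where
  "Bst s = M3 (rl (sqrt (1 + s^2))) (rl s) 0 (rl s) (rl (sqrt (1 + s^2))) 0 0 0 1"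

lemma Bst_G: "Bst s \<in> G"
proof -
  define c where "c = sqrt (1 + s^2)"
  have c0: "0 < c" unfolding c_def by (simp add: add_pos_nonneg)
  have cc: "c * c = 1 + s^2" unfolding c_def by (simp add: add_nonneg_nonneg)
  have e1: "c * (s / c) = s" "s / c * c = s" using c0 by simp_all
  have e2: "s / c * c * (s / c) + 1 / c = c" using c0 cc by (simp add: field_simps power2_eq_square)
  have "Bst s = elem 2 1 (rl (s/c)) ** dg (rl c) (rl (1/c)) 1 ** elem 1 2 (rl (s/c))"
    unfolding Bst_def c_def[symmetric]
    using c0 e2 by (simp add: elem_M3 dg_M3 M3_mult rl_mult[symmetric] rl_add[symmetric] e1 del: rl_one)
  moreover have "dg (rl c) (rl (1/c)) 1 \<in> G" using c0 by (intro dg12_G) (simp_all add: rl_inv_l rl_inv_r)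
  moreover have "elem 2 1 (rl (s/c)) \<in> G" "elem 1 2 (rl (s/c)) \<in> G" by (simp_all add: G_elem)
  ultimately show ?thesis by (metis G_mult)
qed

lemma Bst_UJ: "UJ (Bst s)"
proof -
  have cc: "sqrt (1 + s^2) * sqrt (1 + s^2) = 1 + s^2" by (simp add: add_nonneg_nonneg)
  have "rl (sqrt (1 + s^2)) * rl (sqrt (1 + s^2)) - rl s * rl s = 1"
    by (simp add: rl_mult[symmetric] rl_diff[symmetric] cc power2_eq_square)
  moreover have "rl s * rl s - rl (sqrt (1 + s^2)) * rl (sqrt (1 + s^2)) = -1"
    by (simp add: rl_mult[symmetric] rl_diff[symmetric] cc rl_minus[symmetric] power2_eq_square del: rl_one)
  moreover have "rl s * rl (sqrt (1 + s^2)) = rl (sqrt (1 + s^2)) * rl s" by (rule rl_comm)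
  ultimately show ?thesis unfolding UJ_def Bst_def
    by (simp add: ctrans_M3 Jmat_M3 M3_mult)
qed

lemma Bst0: "Bst 0 = mat 1" by (simp add: Bst_def mat1_M3)

lemma unit_exists: "\<exists>l. a * l = rl (sqrt (nrm a)) \<and> nrm l = 1"
proof (cases "a = 0")
  case True then show ?thesis by (intro exI[of _ 1]) simp
next
  case False
  let ?l = "dinv a * rl (sqrt (nrm a))"
  have "a * ?l = rl (sqrt (nrm a))" by (simp add: mult.assoc[symmetric] dinv_r[OF False])
  moreover have "nrm ?l = 1"
  proof -
    have "nrm a * nrm (dinv a) = 1" using dinv_r[OF False] nrm_mult[of a "dinv a"] by simp
    then show ?thesis using nrm_pos[OF False] by (simp add: nrm_mult nrm_rl mult.commute)
  qed
  ultimately show ?thesis by blast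
qed

lemma unit_r: "nrm l = 1 \<Longrightarrow> l * cj l = 1" by (simp add: nrm_r)
lemma unit_l: "nrm l = 1 \<Longrightarrow> cj l * l = 1" by (simp add: nrm_l)

definition Rv :: "'a \<Rightarrow> 'a^3^3" where
  "Rv b = M3 1 0 0 0 (rl (sqrt (1 - nrm b))) (- cj b) 0 b (rl (sqrt (1 - nrm b)))"

lemma Rv_facts: assumes "nrm b \<le> 1"
  shows "rl (sqrt (1 - nrm b)) * rl (sqrt (1 - nrm b)) + cj b * b = 1"
    "b * cj b + rl (sqrt (1 - nrm b)) * rl (sqrt (1 - nrm b)) = 1"
proof -
  have "rl (sqrt (1 - nrm b)) * rl (sqrt (1 - nrm b)) = rl (1 - nrm b)"
    using assms by (simp add: rl_mult[symmetric])
  then show "rl (sqrt (1 - nrm b)) * rl (sqrt (1 - nrm b)) + cj b * b = 1"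
    "b * cj b + rl (sqrt (1 - nrm b)) * rl (sqrt (1 - nrm b)) = 1"
    by (simp_all add: nrm_l nrm_r rl_diff)
qed

lemma Rv_inv: assumes "nrm b \<le> 1" shows "inv3 (Rv b) (ctrans cj (Rv b))"
proof -
  note f = Rv_facts[OF assms]
  have c: "rl (sqrt (1 - nrm b)) * cj b = cj b * rl (sqrt (1 - nrm b))"
    "rl (sqrt (1 - nrm b)) * b = b * rl (sqrt (1 - nrm b))" by (simp_all add: rl_comm)
  show ?thesis unfolding inv3_def Rv_def
    by (simp add: ctrans_M3 M3_mult mat1_M3 cj_minus f c)
qed

lemma Rv_UJ: assumes "nrm b \<le> 1" shows "UJ (Rv b)"
proof -
  note f = Rv_facts[OF assms]
  have c: "rl (sqrt (1 - nrm b)) * cj b = cj b * rl (sqrt (1 - nrm b))"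
    "rl (sqrt (1 - nrm b)) * b = b * rl (sqrt (1 - nrm b))" by (simp_all add: rl_comm)
  have f': "- (rl (sqrt (1 - nrm b)) * rl (sqrt (1 - nrm b))) - cj b * b = -1"
     "- (b * cj b) - rl (sqrt (1 - nrm b)) * rl (sqrt (1 - nrm b)) = -1"
    using f by (simp_all add: algebra_simps eq_neg_iff_add_eq_0 diff_conv_add_uminus[symmetric])
  show ?thesis unfolding UJ_def Rv_def
    by (simp add: ctrans_M3 M3_mult Jmat_M3 cj_minus f' c)
qed

lemma Rv0: "Rv 0 = mat 1" by (simp add: Rv_def mat1_M3)

lemma Rv_G: assumes nb: "nrm b \<le> 1" shows "Rv b \<in> G"
proof (cases "nrm b = 1")
  case True
  have "Rv b = M3 1 0 0 0 0 (- cj b) 0 (- (- b)) 0" unfolding Rv_def using True by simp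
  moreover have "M3 1 0 0 0 0 (- cj b) 0 (- (- b)) 0 \<in> G"
    by (rule w23_G) (simp_all add: nrm_l nrm_r True)
  ultimately show ?thesis by simp
next
  case False
  define r where "r = sqrt (1 - nrm b)"
  have r0: "0 < r" using nb False unfolding r_def by simp
  have rr: "r * r = 1 - nrm b" using nb unfolding r_def by simp
  define \<rho> where "\<rho> = rl r"
  define \<iota> where "\<iota> = rl (1 / r)"
  define \<beta> where "\<beta> = b * \<iota>"
  define \<gamma> where "\<gamma> = - (\<iota> * cj b)"
  have ri: "\<rho> * \<iota> = 1" "\<iota> * \<rho> = 1" unfolding \<rho>_def \<iota>_def using r0 by (simp_all add: rl_inv_l rl_inv_r)
  have e1: "\<rho> * \<gamma> = - cj b" unfolding \<gamma>_def by (simp add: mult.assoc[symmetric] ri)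
  have e2: "\<beta> * \<rho> = b" unfolding \<beta>_def by (simp add: mult.assoc ri)
  have e3: "b * \<gamma> + \<iota> = \<rho>"
  proof -
    have bi: "b * \<iota> = \<iota> * b" unfolding \<iota>_def by (rule rl_comm[symmetric])
    have "b * \<gamma> + \<iota> = - (\<iota> * b * cj b) + \<iota>" unfolding \<gamma>_def
      by (simp add: mult.assoc[symmetric] bi)
    also have "\<dots> = \<iota> * (1 - b * cj b)" by (simp add: algebra_simps)
    also have "\<dots> = rl (1 / r) * rl (1 - nrm b)" by (simp add: nrm_r \<iota>_def rl_diff)
    also have "\<dots> = rl (1 / r * (1 - nrm b))" by (simp only: rl_mult)
    also have "1 / r * (1 - nrm b) = r" using rr r0 by (simp add: field_simps)
    finally show ?thesis by (simp add: \<rho>_def)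
  qed
  have "elem 3 2 \<beta> ** dg 1 \<rho> \<iota> ** elem 2 3 \<gamma> = M3 1 0 0 0 \<rho> (\<rho> * \<gamma>) 0 (\<beta> * \<rho>) (\<beta> * \<rho> * \<gamma> + \<iota>)"
    by (simp add: elem_M3 dg_M3 M3_mult)
  also have "\<dots> = M3 1 0 0 0 \<rho> (- cj b) 0 b \<rho>" by (simp only: e1 e2 e3)
  also have "\<dots> = Rv b" unfolding Rv_def r_def[symmetric] \<rho>_def ..
  finally have "Rv b = elem 3 2 \<beta> ** dg 1 \<rho> \<iota> ** elem 2 3 \<gamma>" ..
  moreover have "dg 1 \<rho> \<iota> \<in> G" by (rule dg23_G[OF ri])
  moreover have "elem 3 2 \<beta> \<in> G" "elem 2 3 \<gamma> \<in> G" by (simp_all add: G_elem)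
  ultimately show ?thesis by (metis G_mult)
qed

lemma Rv_H: assumes nb: "nrm b \<le> 1" shows "Rv b \<in> Hgrp cj G"
proof -
  define \<gamma> where "\<gamma> = (\<lambda>t. M3 1 0 0 0 (rl (sqrt (1 - t * t * nrm b))) (- cj (rl t * b)) 0 (rl t * b)
      (rl (sqrt (1 - t * t * nrm b))))"
  have g: "\<gamma> t = Rv (rl t * b)" for t unfolding \<gamma>_def Rv_def by (simp add: nrm_mult nrm_rl)
  have nt: "t \<in> {0..1} \<Longrightarrow> nrm (rl t * b) \<le> 1" for t
  proof -
    assume t: "t \<in> {0..1}"
    have "t * t \<le> 1" using t by (simp add: mult_le_one)
    then have "t * t * nrm b \<le> 1 * 1" using nb by (intro mult_mono) simp_all
    then show ?thesis by (simp add: nrm_mult nrm_rl)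
  qed
  have "\<gamma> 1 \<in> Hgrp cj G"
  proof (rule path_H)
    show "continuous_on {0..1} \<gamma>" unfolding \<gamma>_def
      by (intro c_M3 c_rl c_mult c_minus c_cj continuous_intros)
    show "\<gamma> t \<in> G \<and> UJ (\<gamma> t)" if "t \<in> {0..1}" for t
      unfolding g using Rv_G Rv_UJ nt[OF that] by blast
    show "\<gamma> 0 = mat 1" unfolding g by (simp add: Rv0)
  qed
  then show ?thesis unfolding g by simp
qed

lemma BR_H: assumes i: "inv3 R (ctrans cj R)" and u: "UJ R" shows "R ** Bst s ** ctrans cj R \<in> Hgrp cj G"
proof -
  define \<gamma> where "\<gamma> = (\<lambda>t. R ** Bst (t * s) ** ctrans cj R)"
  have "\<gamma> 1 \<in> Hgrp cj G"
  proof (rule path_H)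
    show "continuous_on {0..1} \<gamma>" unfolding \<gamma>_def Bst_def
      by (intro c_matmul c_M3 c_rl continuous_intros)
    show "\<gamma> t \<in> G \<and> UJ (\<gamma> t)" for t
      unfolding \<gamma>_def using G_conj[OF Bst_G i] UJ_mult[OF UJ_mult[OF u Bst_UJ] UJ_ctrans[OF i u]] by blast
    show "\<gamma> 0 = mat 1" unfolding \<gamma>_def using i by (simp add: Bst0 inv3_def)
  qed
  then show ?thesis unfolding \<gamma>_def by simp
qed

lemma UJ_entry: assumes "UJ M"
  shows "cj (M$1$i) * M$1$j - cj (M$2$i) * M$2$j - cj (M$3$i) * M$3$j = Jmat$i$j"
proof -
  have "(ctrans cj M ** Jmat ** M)$i$j = Jmat$i$j" using assms unfolding UJ_def by simp
  then show ?thesis by (simp add: mult_nth ctrans_def Jmat_def algebra_simps)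
qed

lemma UJ_dg_unit: "nrm l = 1 \<Longrightarrow> UJ (dg l 1 1)" "nrm l = 1 \<Longrightarrow> UJ (dg 1 l 1)"
  by (simp_all add: UJ_def ctrans_dg dg_mult J_dg unit_l)

lemma inv3_dg_unit: "nrm l = 1 \<Longrightarrow> inv3 (dg l 1 1) (dg (cj l) 1 1)" "nrm l = 1 \<Longrightarrow> inv3 (dg 1 l 1) (dg 1 (cj l) 1)"
  by (simp_all add: inv3_def dg_mult unit_l unit_r dg_one)

lemma UJ_Jinv: assumes B: "B \<in> G" "UJ B" shows "inv3 B (Jmat ** ctrans cj B ** Jmat)" "UJ (Jmat ** ctrans cj B ** Jmat)"
proof -
  have i: "inv3 B (minv B)" using G_inv B by blast
  then show "inv3 B (Jmat ** ctrans cj B ** Jmat)" using UJ_inv[OF i B(2)] by simp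
  then show "UJ (Jmat ** ctrans cj B ** Jmat)" using UJ_inv' B(2) by blast
qed

lemma core: assumes i: "inv3 f f'" and u: "UJ f"
  shows "\<exists>h x y z. h \<in> Hgrp cj G \<and> x \<noteq> 0 \<and> y \<noteq> 0 \<and> z \<noteq> 0 \<and> f = h ** dg x y z"
proof -
  define a where "a = f$1$1"
  define a2 where "a2 = f$2$1"
  define a3 where "a3 = f$3$1"
  have "cj a * a - cj a2 * a2 - cj a3 * a3 = 1" using UJ_entry[OF u, of 1 1] by (simp add: a_def a2_def a3_def Jmat_def)
  then have "rl (nrm a - nrm a2 - nrm a3) = rl 1" by (simp add: nrm_l rl_diff)
  then have "nrm a - nrm a2 - nrm a3 = 1" by (rule rl_inj)
  then have na: "nrm a = 1 + nrm a2 + nrm a3" by linarith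
  obtain l where l: "a * l = rl (sqrt (nrm a))" "nrm l = 1" using unit_exists by blast
  define c where "c = sqrt (nrm a)"
  define y2 where "y2 = a2 * l"
  define y3 where "y3 = a3 * l"
  define s where "s = sqrt (nrm y2 + nrm y3)"
  have ny: "nrm y2 = nrm a2" "nrm y3 = nrm a3" using l by (simp_all add: y2_def y3_def nrm_mult)
  have s0: "0 \<le> s" unfolding s_def by simp
  have ss: "s * s = nrm y2 + nrm y3" unfolding s_def by simp
  have cs: "c = sqrt (1 + s^2)" unfolding c_def using na ny ss by (simp add: power2_eq_square)
  define u2 where "u2 = (if s = 0 then 1 else y2 * rl (1/s))"
  define u3 where "u3 = (if s = 0 then 0 else y3 * rl (1/s))"
  have yu0: "y2 = u2 * rl s \<and> y3 = u3 * rl s"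
  proof (cases "s = 0")
    case True
    then have "nrm y2 + nrm y3 = 0" using ss by simp
    then have "y2 = 0" "y3 = 0" using nrm_nonneg[of y2] nrm_nonneg[of y3] by (simp_all add: add_nonneg_eq_0_iff)
    then show ?thesis using True by (simp add: u2_def u3_def)
  next
    case False
    then show ?thesis by (simp add: u2_def u3_def mult.assoc rl_inv_r)
  qed
  have yu: "y2 = u2 * rl s" "y3 = u3 * rl s" using yu0 by simp_all
  have nu: "nrm u2 + nrm u3 = 1"
  proof (cases "s = 0")
    case True then show ?thesis by (simp add: u2_def u3_def)
  next
    case False
    have "nrm u2 + nrm u3 = (nrm y2 + nrm y3) * (1/s * (1/s))" using False
      by (simp add: u2_def u3_def nrm_mult nrm_rl add_divide_distrib)
    also have "\<dots> = 1" using False ss[symmetric] by (simp add: field_simps)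
    finally show ?thesis .
  qed
  obtain m where m: "u2 * m = rl (sqrt (nrm u2))" "nrm m = 1" using unit_exists by blast
  define b where "b = u3 * m"
  have nb: "nrm b = nrm u3" using m by (simp add: b_def nrm_mult)
  have nb1: "nrm b \<le> 1" using nb nu nrm_nonneg[of u2] by linarith
  have sq: "sqrt (1 - nrm b) = sqrt (nrm u2)" using nb nu by (simp add: algebra_simps)
  define R' where "R' = Rv b ** dg 1 (cj m) 1"
  have iR': "inv3 R' (ctrans cj R')"
  proof -
    have "inv3 R' (dg 1 (cj (cj m)) 1 ** ctrans cj (Rv b))" unfolding R'_def
      by (rule inv3_mult[OF Rv_inv[OF nb1] inv3_dg_unit(2)]) (simp add: nrm_cj m)
    then show ?thesis unfolding R'_def by (simp add: ctrans_mult ctrans_dg)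
  qed
  have uR': "UJ R'" unfolding R'_def by (intro UJ_mult Rv_UJ nb1 UJ_dg_unit) (simp add: nrm_cj m)
  define B where "B = R' ** Bst s ** ctrans cj R'"
  have BH: "B \<in> Hgrp cj G" unfolding B_def by (rule BR_H[OF iR' uR'])
  have BG: "B \<in> G" and uB: "UJ B" using H_G[OF BH] H_UJ[OF BH] by auto
  define E where "E = (M3 1 0 0 0 0 0 0 0 0 :: 'a^3^3)"
  define f1 where "f1 = f ** dg l 1 1"
  have uf1: "UJ f1" unfolding f1_def by (intro UJ_mult u UJ_dg_unit l)
  have f1E: "f1 ** E = M3 (rl c) 0 0 (u2 * rl s) 0 0 (u3 * rl s) 0 0"
  proof -
    have "f1 ** E = M3 (a * l) 0 0 (a2 * l) 0 0 (a3 * l) 0 0"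
      unfolding f1_def E_def by (subst M3_eta[of f]) (simp add: dg_M3 M3_mult a_def a2_def a3_def)
    then show ?thesis using l yu by (simp add: y2_def y3_def c_def)
  qed
  have BE: "B ** E = f1 ** E"
  proof -
    have mc: "u2 * m * cj m = u2" "u3 * m * cj m = u3" using unit_r[OF m(2)] by (simp_all add: mult.assoc)
    have "ctrans cj R' ** E = E" unfolding R'_def E_def Rv_def
      by (simp add: ctrans_mult ctrans_dg ctrans_M3 dg_M3 M3_mult)
    then have "B ** E = R' ** (Bst s ** E)" unfolding B_def by (simp add: matrix_mul_assoc[symmetric])
    also have "\<dots> = M3 (rl c) 0 0 (rl (sqrt (nrm u2)) * cj m * rl s) 0 0 (u3 * m * cj m * rl s) 0 0"
      unfolding R'_def Bst_def E_def Rv_def cs[symmetric] sq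
      by (simp add: dg_M3 M3_mult mult.assoc b_def)
    also have "\<dots> = M3 (rl c) 0 0 (u2 * rl s) 0 0 (u3 * rl s) 0 0" unfolding m(1)[symmetric] mc ..
    finally show ?thesis using f1E by simp
  qed
  obtain Bi where Bi: "inv3 B Bi" "UJ Bi" "Bi = Jmat ** ctrans cj B ** Jmat" using UJ_Jinv[OF BG uB] by blast
  define M1 where "M1 = Bi ** f1"
  have uM1: "UJ M1" unfolding M1_def by (rule UJ_mult[OF Bi(2) uf1])
  have BM1: "B ** M1 = f1" unfolding M1_def using Bi(1) by (simp add: inv3_def matrix_mul_assoc)
  have "M1 ** E = Bi ** (B ** E)" unfolding M1_def BE by (simp add: matrix_mul_assoc)
  also have "\<dots> = E" using Bi(1) by (simp add: inv3_def matrix_mul_assoc)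
  finally have M1E: "M1 ** E = E" .
  have M1c: "M1$1$1 = 1" "M1$2$1 = 0" "M1$3$1 = 0"
    using arg_cong[OF M1E, of "\<lambda>X. X$1$1"] arg_cong[OF M1E, of "\<lambda>X. X$2$1"] arg_cong[OF M1E, of "\<lambda>X. X$3$1"]
    by (simp_all add: E_def mult_nth)
  have M1r: "M1$1$2 = 0" "M1$1$3 = 0"
    using UJ_entry[OF uM1, of 1 2] UJ_entry[OF uM1, of 1 3] M1c by (simp_all add: Jmat_def)
  define p where "p = M1$2$2"
  define q where "q = M1$3$2"
  have "- (cj p * p) - cj q * q = -1" using UJ_entry[OF uM1, of 2 2] M1r by (simp add: Jmat_def p_def q_def)
  then have "rl (- nrm p - nrm q) = rl (-1)" by (simp add: nrm_l rl_diff rl_minus)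
  then have "- nrm p - nrm q = -1" by (rule rl_inj)
  then have npq: "nrm p + nrm q = 1" by linarith
  obtain m' where m': "p * m' = rl (sqrt (nrm p))" "nrm m' = 1" using unit_exists by blast
  define b' where "b' = q * m'"
  have nb': "nrm b' = nrm q" using m' by (simp add: b'_def nrm_mult)
  have nb1': "nrm b' \<le> 1" using nb' npq nrm_nonneg[of p] by linarith
  have sq': "sqrt (1 - nrm b') = sqrt (nrm p)" using nb' npq by (simp add: algebra_simps)
  define R where "R = Rv b'"
  have RH: "R \<in> Hgrp cj G" unfolding R_def by (rule Rv_H[OF nb1'])
  have iR: "inv3 R (ctrans cj R)" unfolding R_def by (rule Rv_inv[OF nb1'])
  have uR: "UJ R" unfolding R_def by (rule Rv_UJ[OF nb1'])
  define M2 where "M2 = ctrans cj R ** M1 ** dg 1 m' 1"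
  have uM2: "UJ M2" unfolding M2_def
    by (intro UJ_mult UJ_ctrans[OF iR uR] uM1 UJ_dg_unit m')
  define Pr where "Pr = (M3 1 0 0 0 1 0 0 0 0 :: 'a^3^3)"
  have "M1 ** dg 1 m' 1 ** Pr = M3 1 0 0 0 (p * m') 0 0 (q * m') 0"
    unfolding Pr_def by (subst M3_eta[of M1]) (simp add: dg_M3 M3_mult M1c M1r p_def q_def)
  also have "\<dots> = R ** Pr" unfolding R_def Rv_def Pr_def sq' m'(1) b'_def[symmetric] by (simp add: M3_mult)
  finally have "M1 ** dg 1 m' 1 ** Pr = R ** Pr" .
  then have M2P: "M2 ** Pr = Pr" unfolding M2_def using iR
    by (simp add: inv3_def matrix_mul_assoc[symmetric]) (simp add: matrix_mul_assoc)
  have M2c: "M2$1$1 = 1" "M2$2$1 = 0" "M2$3$1 = 0" "M2$1$2 = 0" "M2$2$2 = 1" "M2$3$2 = 0"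
    using arg_cong[OF M2P, of "\<lambda>X. X$1$1"] arg_cong[OF M2P, of "\<lambda>X. X$2$1"] arg_cong[OF M2P, of "\<lambda>X. X$3$1"]
      arg_cong[OF M2P, of "\<lambda>X. X$1$2"] arg_cong[OF M2P, of "\<lambda>X. X$2$2"] arg_cong[OF M2P, of "\<lambda>X. X$3$2"]
    by (simp_all add: Pr_def mult_nth)
  have M2r: "M2$1$3 = 0" "M2$2$3 = 0"
    using UJ_entry[OF uM2, of 1 3] UJ_entry[OF uM2, of 2 3] M2c by (simp_all add: Jmat_def)
  define v where "v = M2$3$3"
  have "- (cj v * v) = -1" using UJ_entry[OF uM2, of 3 3] M2r by (simp add: Jmat_def v_def)
  then have "rl (nrm v) = rl 1" by (simp add: nrm_l)
  then have "nrm v = 1" by (rule rl_inj)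
  then have v0: "v \<noteq> 0" by auto
  have M2d: "M2 = dg 1 1 v" using M2c M2r by (subst M3_eta[of M2]) (simp add: dg_M3 v_def)
  have M1d: "M1 = R ** dg 1 1 v ** dg 1 (cj m') 1"
  proof -
    have "R ** M2 = M1 ** dg 1 m' 1" unfolding M2_def using iR by (simp add: inv3_def matrix_mul_assoc)
    then have "R ** M2 ** dg 1 (cj m') 1 = M1" using inv3_dg_unit(2)[OF m'(2)]
      by (simp add: inv3_def matrix_mul_assoc[symmetric])
    then show ?thesis using M2d by simp
  qed
  have ff: "f = f1 ** dg (cj l) 1 1" unfolding f1_def using inv3_dg_unit(1)[OF l(2)]
    by (simp add: inv3_def matrix_mul_assoc[symmetric])
  have "f = (B ** R) ** dg (cj l) (cj m') v"
    unfolding ff BM1[symmetric] M1d by (simp add: matrix_mul_assoc[symmetric] dg_mult)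
  moreover have "B ** R \<in> Hgrp cj G" by (rule H_mult[OF BH RH])
  moreover have "cj l \<noteq> 0" "cj m' \<noteq> 0" using l(2) m'(2) by auto
  ultimately show ?thesis using v0 by blast
qed

lemma UJ_right_entry: assumes "inv3 g g'" "UJ g"
  shows "g$i$1 * cj (g$j$1) - g$i$2 * cj (g$j$2) - g$i$3 * cj (g$j$3) = Jmat$i$j"
proof -
  have "(g ** Jmat ** ctrans cj g)$i$j = Jmat$i$j" using UJ_right[OF assms] by simp
  then show ?thesis by (simp add: mult_nth ctrans_def Jmat_def algebra_simps)
qed

lemma neg_nrm_ne1: "- (cj x * x) \<noteq> 1" "- (x * cj x) \<noteq> 1"
proof -
  have "rl (- nrm x) \<noteq> rl 1"
  proof
    assume "rl (- nrm x) = rl 1"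
    then have "- nrm x = 1" by (rule rl_inj)
    then show False using nrm_nonneg[of x] by linarith
  qed
  then show "- (cj x * x) \<noteq> 1" "- (x * cj x) \<noteq> 1" by (simp_all add: nrm_l nrm_r rl_minus)
qed

lemma not_conj_12: assumes h: "h \<in> Hgrp cj G" and e: "conjgrp h (P1 G) = conjgrp w (P1 G)"
  and w: "w \<in> G" "w$1$1 = 0" "w$3$1 = 0" "w$2$1 = -1"
  shows False
proof -
  have hG: "h \<in> G" using H_G h .
  have p: "minv w ** h \<in> P1 G" using normP1'[OF hG w(1) e] .
  have hw: "h = w ** (minv w ** h)" using G_inv[OF w(1)] by (simp add: inv3_def matrix_mul_assoc)
  define p where "p = minv w ** h"
  have pu: "p$2$1 = 0" "p$3$1 = 0" using p by (simp_all add: p_def P1_eq upper_def)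
  have "h$1$1 = 0" "h$2$1 = - p$1$1" "h$3$1 = 0"
    using hw[folded p_def] pu w by (simp_all add: mult_nth)
  then show False using UJ_entry[OF H_UJ[OF h], of 1 1] neg_nrm_ne1 by (simp add: Jmat_def cj_minus)
qed

lemma not_conj_23: assumes h: "h \<in> Hgrp cj G" and e: "conjgrp h (P2 G) = P3 G" shows False
proof -
  have hG: "h \<in> G" using H_G h .
  have ih: "inv3 h (minv h)" using G_inv[OF hG] .
  have "conjgrp (h ** w2) (P1 G) = conjgrp w3 (P1 G)"
    using e conjgrp_conjgrp[OF ih inv3_w2] by (simp add: P2_conj P3_conj)
  then have p: "minv w3 ** (h ** w2) \<in> P1 G" using normP1'[OF G_mult[OF hG w2_G] w3_G] by simp
  define p where "p = minv w3 ** (h ** w2)"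
  have "w3 ** p ** w2' = h" unfolding p_def minv_eq[OF inv3_w3] using inv3_w3 inv3_w2
    by (simp add: inv3_def matrix_mul_assoc inv3_cancel)
  then have hp: "h = w3 ** p ** w2'" by simp
  have pu: "p$3$1 = 0" "p$3$2 = 0" using p by (simp_all add: p_def P1_eq upper_def)
  have "h$1$1 = 0" "h$1$2 = 0" "h$1$3 = p$3$3"
    using hp pu by (simp_all add: mult_nth w3_def w2'_def)
  then show False using UJ_right_entry[OF ih H_UJ[OF h], of 1 1] neg_nrm_ne1 by (simp add: Jmat_def cj_minus)
qed

lemma Horbit_mem: "X \<in> Horbit cj G X"
  unfolding Horbit_def using one_H conjgrp_one by (metis (mono_tags, lifting) mem_Collect_eq)

lemma Horbit_eq_conj: "Horbit cj G X = Horbit cj G Y \<Longrightarrow> \<exists>h \<in> Hgrp cj G. Y = conjgrp h X"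
proof -
  assume "Horbit cj G X = Horbit cj G Y"
  then have "Y \<in> Horbit cj G X" using Horbit_mem[of Y] by simp
  then show ?thesis unfolding Horbit_def by blast
qed

theorem three_orbits_thm: "three_orbits cj G"
proof -
  have w2c: "w2 \<in> G" "w2$1$1 = 0" "w2$3$1 = 0" "w2$2$1 = -1" using w2_G by (simp_all add: w2_def)
  have w3c: "w3 \<in> G" "w3$1$1 = 0" "w3$3$1 = 0" "w3$2$1 = -1" using w3_G by (simp_all add: w3_def)
  have d12: "Horbit cj G (P1 G) \<noteq> Horbit cj G (P2 G)"
  proof
    assume "Horbit cj G (P1 G) = Horbit cj G (P2 G)"
    then obtain h where "h \<in> Hgrp cj G" "P2 G = conjgrp h (P1 G)" using Horbit_eq_conj by blast
    then show False using not_conj_12[OF _ _ w2c] by (metis P2_conj)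
  qed
  have d13: "Horbit cj G (P1 G) \<noteq> Horbit cj G (P3 G)"
  proof
    assume "Horbit cj G (P1 G) = Horbit cj G (P3 G)"
    then obtain h where "h \<in> Hgrp cj G" "P3 G = conjgrp h (P1 G)" using Horbit_eq_conj by blast
    then show False using not_conj_12[OF _ _ w3c] by (metis P3_conj)
  qed
  have d23: "Horbit cj G (P2 G) \<noteq> Horbit cj G (P3 G)"
  proof
    assume "Horbit cj G (P2 G) = Horbit cj G (P3 G)"
    then obtain h where "h \<in> Hgrp cj G" "P3 G = conjgrp h (P2 G)" using Horbit_eq_conj by blast
    then show False using not_conj_23 by metis
  qed
  have sub: "Horbit cj G P \<in> {Horbit cj G (P1 G), Horbit cj G (P2 G), Horbit cj G (P3 G)}"
    if P: "P \<in> sigma_parabolics cj G" for P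
  proof -
    obtain f f' where f: "inv3 f f'" "UJ f"
      and fP: "P = conjgrp f (P1 G) \<or> P = conjgrp f (P2 G) \<or> P = conjgrp f (P3 G)"
      using classify[OF P] by blast
    obtain h x y z where hx: "h \<in> Hgrp cj G" "x \<noteq> 0" "y \<noteq> 0" "z \<noteq> 0" "f = h ** dg x y z"
      using core[OF f] by blast
    have ih: "inv3 h (minv h)" using G_inv[OF H_G[OF hx(1)]] .
    have cf: "conjgrp f X = conjgrp h X" if "conjgrp (dg x y z) X = X" for X
      using conjgrp_conjgrp[OF ih inv3_dg[OF hx(2-4)], of X] that hx(5) by simp
    from fP show ?thesis
    proof (elim disjE)
      assume "P = conjgrp f (P1 G)"
      then have "Horbit cj G P = Horbit cj G (P1 G)" using cf conj_dg(1)[OF hx(2-4)] Horbit_conj[OF hx(1)] by simp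
      then show ?thesis by simp
    next
      assume "P = conjgrp f (P2 G)"
      then have "Horbit cj G P = Horbit cj G (P2 G)" using cf conj_dg(2)[OF hx(2-4)] Horbit_conj[OF hx(1)] by simp
      then show ?thesis by simp
    next
      assume "P = conjgrp f (P3 G)"
      then have "Horbit cj G P = Horbit cj G (P3 G)" using cf conj_dg(3)[OF hx(2-4)] Horbit_conj[OF hx(1)] by simp
      then show ?thesis by simp
    qed
  qed
  have "Horbit cj G ` sigma_parabolics cj G = {Horbit cj G (P1 G), Horbit cj G (P2 G), Horbit cj G (P3 G)}"
    using sub P1_sp P2_sp P3_sp by blast
  moreover have "card {Horbit cj G (P1 G), Horbit cj G (P2 G), Horbit cj G (P3 G)} = 3"
    using d12 d13 d23 by simp
  ultimately show ?thesis unfolding three_orbits_def using P1_sp P2_sp P3_sp by blast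
qed

end

lemma inv3_of_det: "det (g::'a::field^3^3) \<noteq> 0 \<Longrightarrow> inv3 g (minv g)"
  using invertible_det_nz[of g] unfolding invertible_def
  by (metis inv3_def inv3_minv)

lemma det_minv: "det (g::'a::field^3^3) = 1 \<Longrightarrow> det (minv g) = 1"
proof -
  assume d: "det g = 1"
  then have "inv3 g (minv g)" by (simp add: inv3_of_det)
  then have "det g * det (minv g) = 1" unfolding inv3_def by (metis det_I det_mul)
  then show ?thesis using d by simp
qed

lemma det_conj3: "det (g::'a::field^3^3) = 1 \<Longrightarrow> inv3 a b \<Longrightarrow> det (a ** g ** b) = 1"
proof -
  assume "det g = 1" "inv3 a b"
  moreover then have "det a * det b = 1" unfolding inv3_def by (metis det_I det_mul)
  ultimately show ?thesis by (simp add: det_mul algebra_simps)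
qed

lemma det_elem: "i \<noteq> j \<Longrightarrow> det (elem i j (q::'a::comm_ring_1)) = 1"
  using exhaust_3[of i] exhaust_3[of j] by (auto simp: det_3 elem_def)

lemma SL3_real_sfld: "sfld (\<lambda>x::real. x) (\<lambda>r. r) (\<lambda>x. x * x) SL3_real"
proof
  show "continuous_on UNIV (\<lambda>p::real\<times>real. fst p * snd p)" by (intro continuous_intros)
  show "continuous_on UNIV (\<lambda>p::real\<times>real. fst p + snd p)" by (intro continuous_intros)
  fix g h a b :: "real^3^3"
  show "g \<in> SL3_real \<Longrightarrow> inv3 g (minv g)" by (simp add: SL3_real_def inv3_of_det)
  show "g \<in> SL3_real \<Longrightarrow> h \<in> SL3_real \<Longrightarrow> g ** h \<in> SL3_real" by (simp add: SL3_real_def det_mul)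
  show "g \<in> SL3_real \<Longrightarrow> minv g \<in> SL3_real" by (simp add: SL3_real_def det_minv)
  show "g \<in> SL3_real \<Longrightarrow> inv3 a b \<Longrightarrow> a ** g ** b \<in> SL3_real" by (simp add: SL3_real_def det_conj3)
  have "ctrans (\<lambda>x::real. x) g = transpose g" by (simp add: ctrans_def transpose_def)
  then show "g \<in> SL3_real \<Longrightarrow> ctrans (\<lambda>x. x) g \<in> SL3_real" by (simp add: SL3_real_def)
  fix i j :: 3 and q :: real
  show "i \<noteq> j \<Longrightarrow> elem i j q \<in> SL3_real" by (simp add: SL3_real_def det_elem)
qed (auto simp: algebra_simps intro: continuous_intros)

lemma det_cnj: "det (\<chi> i j. cnj ((A::complex^'n^'n)$i$j)) = cnj (det A)"
  unfolding det_def by (simp add: cnj_sum cnj_prod)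

lemma SL3_complex_sfld: "sfld cnj complex_of_real (\<lambda>z. (cmod z)^2) SL3_complex"
proof
  show "continuous_on UNIV (\<lambda>p::complex\<times>complex. fst p * snd p)" by (intro continuous_intros)
  show "continuous_on UNIV (\<lambda>p::complex\<times>complex. fst p + snd p)" by (intro continuous_intros)
  show "continuous_on UNIV cnj" by (intro continuous_intros)
  show "continuous_on UNIV complex_of_real" by (intro continuous_intros)
  fix x :: complex
  show "cnj x * x = complex_of_real ((cmod x)\<^sup>2)" using complex_norm_square[of x] by (simp add: mult.commute)
  show "x * cnj x = complex_of_real ((cmod x)\<^sup>2)" using complex_norm_square[of x] by simp
  show "cnj x = x \<Longrightarrow> \<exists>r. x = complex_of_real r"
    by (metis Reals_cnj_iff Reals_def rangeE)
  fix g h a b :: "complex^3^3"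
  show "g \<in> SL3_complex \<Longrightarrow> inv3 g (minv g)" by (simp add: SL3_complex_def inv3_of_det)
  show "g \<in> SL3_complex \<Longrightarrow> h \<in> SL3_complex \<Longrightarrow> g ** h \<in> SL3_complex" by (simp add: SL3_complex_def det_mul)
  show "g \<in> SL3_complex \<Longrightarrow> minv g \<in> SL3_complex" by (simp add: SL3_complex_def det_minv)
  show "g \<in> SL3_complex \<Longrightarrow> inv3 a b \<Longrightarrow> a ** g ** b \<in> SL3_complex" by (simp add: SL3_complex_def det_conj3)
  have "ctrans cnj g = transpose (\<chi> i j. cnj (g$i$j))" by (simp add: ctrans_def transpose_def)
  then show "g \<in> SL3_complex \<Longrightarrow> ctrans cnj g \<in> SL3_complex" by (simp add: SL3_complex_def det_cnj)
  fix i j :: 3 and q :: complex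
  show "i \<noteq> j \<Longrightarrow> elem i j q \<in> SL3_complex" by (simp add: SL3_complex_def det_elem)
qed (auto simp: algebra_simps)

section \<open>Quaternion instance\<close>

lemma quat_eq_iff: "x = y \<longleftrightarrow> qRe x = qRe y \<and> qI x = qI y \<and> qJ x = qJ y \<and> qK x = qK y"
  by (cases x, cases y) auto

lemma quat_comps[simp]:
  "qRe 0 = 0" "qI 0 = 0" "qJ 0 = 0" "qK 0 = 0"
  "qRe 1 = 1" "qI 1 = 0" "qJ 1 = 0" "qK 1 = 0"
  "qRe (x + y) = qRe x + qRe y" "qI (x + y) = qI x + qI y" "qJ (x + y) = qJ x + qJ y" "qK (x + y) = qK x + qK y"
  "qRe (x - y) = qRe x - qRe y" "qI (x - y) = qI x - qI y" "qJ (x - y) = qJ x - qJ y" "qK (x - y) = qK x - qK y"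
  "qRe (- x) = - qRe x" "qI (- x) = - qI x" "qJ (- x) = - qJ x" "qK (- x) = - qK x"
  "qRe (x * y) = qRe x * qRe y - qI x * qI y - qJ x * qJ y - qK x * qK y"
  "qI (x * y) = qRe x * qI y + qI x * qRe y + qJ x * qK y - qK x * qJ y"
  "qJ (x * y) = qRe x * qJ y - qI x * qK y + qJ x * qRe y + qK x * qI y"
  "qK (x * y) = qRe x * qK y + qI x * qJ y - qJ x * qI y + qK x * qRe y"
  by (simp_all add: zero_quat_def one_quat_def plus_quat_def minus_quat_def uminus_quat_def times_quat_def)

lemma quat_cnj_comps[simp]: "qRe (quat_cnj x) = qRe x" "qI (quat_cnj x) = - qI x"
  "qJ (quat_cnj x) = - qJ x" "qK (quat_cnj x) = - qK x"
  by (simp_all add: quat_cnj_def)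

definition qrl :: "real \<Rightarrow> quat" where "qrl r = Quat r 0 0 0"
definition qnrm :: "quat \<Rightarrow> real" where "qnrm x = qRe x ^ 2 + qI x ^ 2 + qJ x ^ 2 + qK x ^ 2"

lemma qrl_comps[simp]: "qRe (qrl r) = r" "qI (qrl r) = 0" "qJ (qrl r) = 0" "qK (qrl r) = 0"
  by (simp_all add: qrl_def)

lemma cont_quat_iff: "continuous_on S f \<longleftrightarrow> continuous_on S (\<lambda>x. quat_coords (f x))"
  for f :: "'b::topological_space \<Rightarrow> quat"
proof
  assume c: "continuous_on S f"
  show "continuous_on S (\<lambda>x. quat_coords (f x))"
    unfolding continuous_on_open_invariant
  proof (intro allI impI)
    fix B :: "(real \<times> real \<times> real \<times> real) set" assume "open B"
    then have "open (quat_coords -` B)" unfolding open_quat_def by blast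
    then obtain A where "open A" "A \<inter> S = f -` (quat_coords -` B) \<inter> S"
      using c unfolding continuous_on_open_invariant by blast
    then show "\<exists>A. open A \<and> A \<inter> S = (\<lambda>x. quat_coords (f x)) -` B \<inter> S" by auto
  qed
next
  assume c: "continuous_on S (\<lambda>x. quat_coords (f x))"
  show "continuous_on S f"
    unfolding continuous_on_open_invariant
  proof (intro allI impI)
    fix B :: "quat set" assume "open B"
    then obtain V where V: "open V" "B = quat_coords -` V" unfolding open_quat_def by blast
    then obtain A where "open A" "A \<inter> S = (\<lambda>x. quat_coords (f x)) -` V \<inter> S"
      using c unfolding continuous_on_open_invariant by blast
    then show "\<exists>A. open A \<and> A \<inter> S = f -` B \<inter> S" using V by auto
  qed
qed

lemma cont_quat_iff': "continuous_on S f \<longleftrightarrow> continuous_on S (\<lambda>x. qRe (f x)) \<and> continuous_on S (\<lambda>x. qI (f x))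
   \<and> continuous_on S (\<lambda>x. qJ (f x)) \<and> continuous_on S (\<lambda>x. qK (f x))"
  for f :: "'b::topological_space \<Rightarrow> quat"
  unfolding cont_quat_iff quat_coords_def
proof (intro iffI conjI)
  assume c: "continuous_on S (\<lambda>x. (qRe (f x), qI (f x), qJ (f x), qK (f x)))"
  have "continuous_on S (\<lambda>x. fst (qRe (f x), qI (f x), qJ (f x), qK (f x)))" by (intro continuous_on_fst c)
  then show "continuous_on S (\<lambda>x. qRe (f x))" by simp
  have "continuous_on S (\<lambda>x. fst (snd (qRe (f x), qI (f x), qJ (f x), qK (f x))))" by (intro continuous_on_fst continuous_on_snd c)
  then show "continuous_on S (\<lambda>x. qI (f x))" by simp
  have "continuous_on S (\<lambda>x. fst (snd (snd (qRe (f x), qI (f x), qJ (f x), qK (f x)))))" by (intro continuous_on_fst continuous_on_snd c)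
  then show "continuous_on S (\<lambda>x. qJ (f x))" by simp
  have "continuous_on S (\<lambda>x. snd (snd (snd (qRe (f x), qI (f x), qJ (f x), qK (f x)))))" by (intro continuous_on_snd c)
  then show "continuous_on S (\<lambda>x. qK (f x))" by simp
next
  assume "continuous_on S (\<lambda>x. qRe (f x)) \<and> continuous_on S (\<lambda>x. qI (f x)) \<and>
    continuous_on S (\<lambda>x. qJ (f x)) \<and> continuous_on S (\<lambda>x. qK (f x))"
  then show "continuous_on S (\<lambda>x. (qRe (f x), qI (f x), qJ (f x), qK (f x)))"
    by (intro continuous_on_Pair) auto
qed

lemma cont_qcomps: "continuous_on S f \<Longrightarrow> continuous_on S (\<lambda>x. qRe (f x))"
  "continuous_on S f \<Longrightarrow> continuous_on S (\<lambda>x. qI (f x))"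
  "continuous_on S f \<Longrightarrow> continuous_on S (\<lambda>x. qJ (f x))"
  "continuous_on S f \<Longrightarrow> continuous_on S (\<lambda>x. qK (f x))"
  for f :: "'b::topological_space \<Rightarrow> quat"
  by (simp_all add: cont_quat_iff')

lemma quat_sfld_basic:
  "continuous_on UNIV (\<lambda>p::quat\<times>quat. fst p * snd p)"
  "continuous_on UNIV (\<lambda>p::quat\<times>quat. fst p + snd p)"
  "continuous_on UNIV quat_cnj"
  "continuous_on UNIV qrl"
proof -
  have f: "continuous_on UNIV (\<lambda>p::quat\<times>quat. fst p)" "continuous_on UNIV (\<lambda>p::quat\<times>quat. snd p)"
    by (intro continuous_intros)+
  note fc = cont_qcomps[OF f(1)] cont_qcomps[OF f(2)]
  show "continuous_on UNIV (\<lambda>p::quat\<times>quat. fst p * snd p)"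
    unfolding cont_quat_iff' by (simp add: fc continuous_intros)
  show "continuous_on UNIV (\<lambda>p::quat\<times>quat. fst p + snd p)"
    unfolding cont_quat_iff' by (simp add: fc continuous_intros)
  have i: "continuous_on UNIV (\<lambda>x::quat. x)" by (rule continuous_on_id)
  show "continuous_on UNIV quat_cnj"
    unfolding cont_quat_iff' using cont_qcomps[OF i] by (simp add: continuous_intros)
  show "continuous_on UNIV qrl"
    unfolding cont_quat_iff' by (simp add: continuous_intros)
qed

lemma quat_cplx_nth[simp]:
  "quat_cplx q $ 1 $ 1 = Complex (qRe q) (qI q)" "quat_cplx q $ 1 $ 2 = Complex (qJ q) (qK q)"
  "quat_cplx q $ 2 $ 1 = - cnj (Complex (qJ q) (qK q))" "quat_cplx q $ 2 $ 2 = cnj (Complex (qRe q) (qI q))"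
  by (simp_all add: quat_cplx_def Let_def)

lemma quat_cplx_add_nth: "quat_cplx (x + y) $ i $ k = quat_cplx x $ i $ k + quat_cplx y $ i $ k"
  using exhaust_2[of i] exhaust_2[of k] by (auto simp: complex_eq_iff)

lemma quat_cplx_zero_nth: "quat_cplx 0 $ i $ k = 0"
  using exhaust_2[of i] exhaust_2[of k] by (auto simp: complex_eq_iff)

lemma quat_cplx_mult_nth: "quat_cplx (x * y) $ i $ k =
   quat_cplx x $ i $ 1 * quat_cplx y $ 1 $ k + quat_cplx x $ i $ 2 * quat_cplx y $ 2 $ k"
  using exhaust_2[of i] exhaust_2[of k] by (auto simp: complex_eq_iff algebra_simps)

lemma quat_cplx_cnj_nth: "quat_cplx (quat_cnj x) $ i $ k = cnj (quat_cplx x $ k $ i)"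
  using exhaust_2[of i] exhaust_2[of k] by (auto simp: complex_eq_iff)

lemma quat_cplx_one_nth: "quat_cplx 1 $ i $ k = (if i = k then 1 else 0)"
  using exhaust_2[of i] exhaust_2[of k] by (auto simp: complex_eq_iff)

lemma sum_32: "sum f (UNIV :: (3 \<times> 2) set) = f (1,1) + f (1,2) + f (2,1) + f (2,2) + f (3,1) + f (3,2)"
proof -
  have "sum f (UNIV :: (3 \<times> 2) set) = sum f (UNIV \<times> UNIV)" by (simp add: UNIV_Times_UNIV)
  also have "\<dots> = (\<Sum>a\<in>UNIV. \<Sum>i\<in>UNIV. f (a, i))" by (rule sum.cartesian_product')
  finally show ?thesis by (simp add: sum_3 sum_2 algebra_simps)
qed

lemma mult_nth32: "((X::complex^(3\<times>2)^(3\<times>2)) ** Y) $ p $ q =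
   X$p$(1,1) * Y$(1,1)$q + X$p$(1,2) * Y$(1,2)$q + X$p$(2,1) * Y$(2,1)$q + X$p$(2,2) * Y$(2,2)$q
   + X$p$(3,1) * Y$(3,1)$q + X$p$(3,2) * Y$(3,2)$q"
  by (simp add: matrix_matrix_mult_def sum_32)

lemma Q_nth: "qmat_cplx g $ p $ q = quat_cplx (g $ fst p $ fst q) $ snd p $ snd q"
  by (simp add: qmat_cplx_def)

lemma Q_mult: "qmat_cplx (A ** B) = qmat_cplx A ** qmat_cplx B"
proof -
  have "qmat_cplx (A ** B) $ (a, i) $ (c, k) = (qmat_cplx A ** qmat_cplx B) $ (a, i) $ (c, k)" for a c i k
    by (simp add: Q_nth mult_nth mult_nth32 quat_cplx_add_nth quat_cplx_mult_nth algebra_simps)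
  then show ?thesis by (simp add: vec_eq_iff)
qed

lemma Q_one: "qmat_cplx (mat 1) = mat 1"
  by (auto simp: vec_eq_iff Q_nth mat_def quat_cplx_one_nth quat_cplx_zero_nth prod_eq_iff)

lemma Q_inj: "qmat_cplx A = qmat_cplx B \<Longrightarrow> A = B"
proof -
  assume e: "qmat_cplx A = qmat_cplx B"
  have "A $ a $ b = B $ a $ b" for a b
    using arg_cong[OF e, of "\<lambda>M. M $ (a,1) $ (b,1)"] arg_cong[OF e, of "\<lambda>M. M $ (a,1) $ (b,2)"]
    by (simp add: Q_nth quat_eq_iff)
  then show ?thesis by (simp add: vec_eq_iff)
qed

lemma Q_ctrans: "qmat_cplx (ctrans quat_cnj g) = transpose (\<chi> p q. cnj (qmat_cplx g $ p $ q))"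
  by (simp add: vec_eq_iff Q_nth ctrans_def transpose_def quat_cplx_cnj_nth)

definition rowop :: "'n::finite \<Rightarrow> 'n \<Rightarrow> complex \<Rightarrow> complex^'n^'n \<Rightarrow> complex^'n^'n" where
  "rowop k l c A = (\<chi> r. if r = k then row k A + c *s row l A else row r A)"

lemma rowop_nth: "rowop k l c A $ r $ s = (if r = k then A$k$s + c * A$l$s else A$r$s)"
  by (simp add: rowop_def row_def)

lemma rowop_det: "k \<noteq> l \<Longrightarrow> det (rowop k l c A) = det A"
  unfolding rowop_def by (rule det_row_operation)

lemma Q_elem_det: assumes ij: "i \<noteq> j" shows "det (qmat_cplx (elem i j q)) = 1"
proof -
  define B where "B = rowop (i,2) (j,2) (quat_cplx q $2$2) (rowop (i,2) (j,1) (quat_cplx q $2$1)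
     (rowop (i,1) (j,2) (quat_cplx q $1$2) (rowop (i,1) (j,1) (quat_cplx q $1$1) (mat 1 :: complex^(3\<times>2)^(3\<times>2)))))"
  have "det B = 1" unfolding B_def using ij by (simp add: rowop_det)
  moreover have "qmat_cplx (elem i j q) = B"
  proof -
    have "qmat_cplx (elem i j q) $ (a,x) $ (b,y) = B $ (a,x) $ (b,y)" for a b x y
      using exhaust_2[of x] exhaust_2[of y] ij
      by (auto simp: B_def rowop_nth Q_nth elem_def mat_def quat_cplx_one_nth quat_cplx_zero_nth complex_eq_iff)
    then show ?thesis by (simp add: vec_eq_iff)
  qed
  ultimately show ?thesis by simp
qed
definition sw2 :: "2 \<Rightarrow> 2" where "sw2 i = (if i = 1 then 2 else 1)"
definition sg2 :: "2 \<Rightarrow> complex" where "sg2 i = (if i = 1 then 1 else -1)"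

definition Tq :: "complex^(3\<times>2)^(3\<times>2) \<Rightarrow> complex^(3\<times>2)^(3\<times>2)" where
  "Tq X = (\<chi> p q. sg2 (snd p) * sg2 (snd q) * cnj (X $ (fst p, sw2 (snd p)) $ (fst q, sw2 (snd q))))"

lemma Tq_nth: "Tq X $ (a,i) $ (b,k) = sg2 i * sg2 k * cnj (X $ (a, sw2 i) $ (b, sw2 k))"
  by (simp add: Tq_def)

lemma sw2_simps[simp]: "sw2 1 = 2" "sw2 2 = 1" by (simp_all add: sw2_def)
lemma sg2_simps[simp]: "sg2 1 = 1" "sg2 2 = -1" by (simp_all add: sg2_def)

lemma Tq_mult: "Tq (X ** Y) = Tq X ** Tq Y"
proof -
  have "Tq (X ** Y) $ (a,i) $ (c,k) = (Tq X ** Tq Y) $ (a,i) $ (c,k)" for a c i k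
    using exhaust_2[of i] exhaust_2[of k]
    by (auto simp: Tq_nth mult_nth32 algebra_simps)
  then show ?thesis by (simp add: vec_eq_iff)
qed

lemma Tq_one: "Tq (mat 1) = mat 1"
proof -
  have "Tq (mat 1) $ (a,i) $ (c,k) = mat 1 $ (a,i) $ (c,k)" for a c i k
    using exhaust_2[of i] exhaust_2[of k] by (auto simp: Tq_nth mat_def)
  then show ?thesis by (simp add: vec_eq_iff)
qed

lemma Tq_Q: "Tq (qmat_cplx g) = qmat_cplx g"
proof -
  have "Tq (qmat_cplx g) $ (a,i) $ (c,k) = qmat_cplx g $ (a,i) $ (c,k)" for a c i k
    using exhaust_2[of i] exhaust_2[of k] by (auto simp: Tq_nth Q_nth)
  then show ?thesis by (simp add: vec_eq_iff)
qed

definition unQ :: "complex^(3\<times>2)^(3\<times>2) \<Rightarrow> quat^3^3" where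
  "unQ M = (\<chi> a b. Quat (Re (M $ (a,1) $ (b,1))) (Im (M $ (a,1) $ (b,1))) (Re (M $ (a,1) $ (b,2))) (Im (M $ (a,1) $ (b,2))))"

lemma unQ_Q: assumes "Tq M = M" shows "qmat_cplx (unQ M) = M"
proof -
  have "qmat_cplx (unQ M) $ (a,i) $ (c,k) = M $ (a,i) $ (c,k)" for a c i k
  proof -
    have e1: "M $ (a,2) $ (c,1) = - cnj (M $ (a,1) $ (c,2))"
      using arg_cong[OF assms, of "\<lambda>X. X $ (a,2) $ (c,1)"] by (simp add: Tq_nth)
    have e2: "M $ (a,2) $ (c,2) = cnj (M $ (a,1) $ (c,1))"
      using arg_cong[OF assms, of "\<lambda>X. X $ (a,2) $ (c,2)"] by (simp add: Tq_nth)
    show ?thesis using exhaust_2[of i] exhaust_2[of k] e1 e2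
      by (auto simp: Q_nth unQ_def complex_eq_iff)
  qed
  then show ?thesis by (simp add: vec_eq_iff)
qed

lemma SL3_quat_inv: assumes "g \<in> SL3_quat" shows "inv3 g (minv g)"
proof -
  have "det (qmat_cplx g) \<noteq> 0" using assms by (simp add: SL3_quat_def)
  then obtain M where M: "qmat_cplx g ** M = mat 1" "M ** qmat_cplx g = mat 1"
    using invertible_det_nz[of "qmat_cplx g"] unfolding invertible_def by blast
  have "Tq M ** qmat_cplx g = mat 1" using arg_cong[OF M(2), of Tq] by (simp add: Tq_mult Tq_Q Tq_one)
  then have "Tq M = M" using M(1) by (metis matrix_mul_assoc matrix_mul_lid matrix_mul_rid)
  then have QM: "qmat_cplx (unQ M) = M" by (rule unQ_Q)
  have "qmat_cplx (g ** unQ M) = qmat_cplx (mat 1)" "qmat_cplx (unQ M ** g) = qmat_cplx (mat 1)"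
    using M by (simp_all add: Q_mult QM Q_one)
  then have "inv3 g (unQ M)" unfolding inv3_def using Q_inj by blast
  then show ?thesis by (rule inv3_minv)
qed

lemma det_Q_inv: "inv3 a b \<Longrightarrow> det (qmat_cplx a) * det (qmat_cplx b) = 1"
  unfolding inv3_def by (metis Q_mult Q_one det_I det_mul)

lemma SL3_quat_sfld: "sfld quat_cnj qrl qnrm SL3_quat"
proof
  show "continuous_on UNIV (\<lambda>p::quat\<times>quat. fst p * snd p)" "continuous_on UNIV (\<lambda>p::quat\<times>quat. fst p + snd p)"
    "continuous_on UNIV quat_cnj" "continuous_on UNIV qrl" by (rule quat_sfld_basic)+
  fix g h a b :: "quat^3^3"
  show gi: "g \<in> SL3_quat \<Longrightarrow> inv3 g (minv g)" by (rule SL3_quat_inv)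
  show "g \<in> SL3_quat \<Longrightarrow> h \<in> SL3_quat \<Longrightarrow> g ** h \<in> SL3_quat" by (simp add: SL3_quat_def Q_mult det_mul)
  show "g \<in> SL3_quat \<Longrightarrow> minv g \<in> SL3_quat"
    using det_Q_inv[OF SL3_quat_inv] by (simp add: SL3_quat_def)
  show "g \<in> SL3_quat \<Longrightarrow> inv3 a b \<Longrightarrow> a ** g ** b \<in> SL3_quat"
    using det_Q_inv[of a b] by (simp add: SL3_quat_def Q_mult det_mul algebra_simps)
  show "g \<in> SL3_quat \<Longrightarrow> ctrans quat_cnj g \<in> SL3_quat"
    by (simp add: SL3_quat_def Q_ctrans det_cnj)
  fix i j :: 3 and q :: quat
  show "i \<noteq> j \<Longrightarrow> elem i j q \<in> SL3_quat" by (simp add: SL3_quat_def Q_elem_det)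
next
  fix x y :: quat and r s :: real
  show "quat_cnj (x + y) = quat_cnj x + quat_cnj y" by (simp add: quat_eq_iff)
  show "quat_cnj (x * y) = quat_cnj y * quat_cnj x" by (simp add: quat_eq_iff algebra_simps)
  show "quat_cnj (quat_cnj x) = x" by (simp add: quat_eq_iff)
  show "quat_cnj (qrl r) = qrl r" by (simp add: quat_eq_iff)
  show "qrl (r + s) = qrl r + qrl s" by (simp add: quat_eq_iff)
  show "qrl (r * s) = qrl r * qrl s" by (simp add: quat_eq_iff)
  show "qrl 1 = 1" by (simp add: quat_eq_iff)
  show "qrl r = qrl s \<Longrightarrow> r = s" by (simp add: quat_eq_iff)
  show "qrl r * x = x * qrl r" by (simp add: quat_eq_iff algebra_simps)
  show "quat_cnj x * x = qrl (qnrm x)" by (simp add: quat_eq_iff qnrm_def algebra_simps power2_eq_square)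
  show "x * quat_cnj x = qrl (qnrm x)" by (simp add: quat_eq_iff qnrm_def algebra_simps power2_eq_square)
  show "0 \<le> qnrm x" by (simp add: qnrm_def)
  show "qnrm x = 0 \<Longrightarrow> x = 0" by (simp add: qnrm_def quat_eq_iff add_nonneg_eq_0_iff)
  show "quat_cnj x = x \<Longrightarrow> \<exists>r. x = qrl r"
    by (intro exI[of _ "qRe x"]) (simp add: quat_eq_iff)
qed

theorem proposition1p3:
  shows "three_orbits (\<lambda>x::real. x) SL3_real \<and>
         three_orbits cnj SL3_complex \<and>
         three_orbits quat_cnj SL3_quat"
  using sfld.three_orbits_thm[OF SL3_real_sfld] sfld.three_orbits_thm[OF SL3_complex_sfld]
    sfld.three_orbits_thm[OF SL3_quat_sfld] by blast

end
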